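(* Let $a\in(-1,0)$. Then $\beta_a<\Theta_0$.
   Context: For $a\in(-1,0)$ let $\sigma(\tau)=1$ for $\tau>0$ and $\sigma(\tau)=a$ for $\tau<0$. Let $B^1(\mathbb{R})=\{u\in L^2(\mathbb{R}): u'\in L^2(\mathbb{R}),\ \tau u\in L^2(\mathbb{R})\}$. For $\xi\in\mathbb{R}$ set $\mu_a(\xi)=\inf_{u\in B^1(\mathbb{R})\setminus\{0\}}\frac{\int_{\mathbb{R}}(|u'|^2+(\xi+\sigma(\tau)\tau)^2|u|^2)\,d\tau}{\|u\|^2_{L^2(\mathbb{R})}}$ (the lowest eigenvalue of $-\frac{d^2}{d\tau^2}+(\xi+\sigma(\tau)\tau)^2$ on $L^2(\mathbb{R})$), and $\beta_a=\inf_{\xi\in\mathbb{R}}\mu_a(\xi)$. The de Gennes constant is $\Theta_0=\inf_{\xi\in\mathbb{R}}\lambda^N(\xi)$, where $\lambda^N(\xi)$ is the lowest eigenvalue of the Neumann realization of $-\frac{d^2}{d\tau^2}+(\tau+\xi)^2$ on $L^2(\mathbb{R}_+)$. *)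

theory Defs
  imports "HOL-Analysis.Analysis"
begin

definition test_on :: "real set \<Rightarrow> (real \<Rightarrow> real) \<Rightarrow> bool" where
  "test_on I \<phi> \<longleftrightarrow> (\<forall>x. \<phi> differentiable (at x)) \<and> continuous_on UNIV (deriv \<phi>) \<and>
     (\<exists>K. compact K \<and> K \<subseteq> I \<and> (\<forall>x. x \<notin> K \<longrightarrow> \<phi> x = 0))"

definition L2_on :: "real set \<Rightarrow> (real \<Rightarrow> complex) \<Rightarrow> bool" where
  "L2_on I u \<longleftrightarrow> set_borel_measurable lborel I u \<and>
     set_integrable lborel I (\<lambda>x. (cmod (u x))\<^sup>2)"

definition weak_deriv_on :: "real set \<Rightarrow> (real \<Rightarrow> complex) \<Rightarrow> (real \<Rightarrow> complex) \<Rightarrow> bool" where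
  "weak_deriv_on I u v \<longleftrightarrow> (\<forall>\<phi>. test_on I \<phi> \<longrightarrow>
     (LINT x:I|lborel. u x * complex_of_real (deriv \<phi> x)) =
       - (LINT x:I|lborel. v x * complex_of_real (\<phi> x)))"

text \<open>The magnetic step: sigma(t) = 1 for t > 0, a for t < 0 (value at 0 irrelevant).\<close>
definition sigma :: "real \<Rightarrow> real \<Rightarrow> real" where
  "sigma a t = (if t > 0 then 1 else a)"

definition B1_pair :: "real set \<Rightarrow> (real \<Rightarrow> complex) \<Rightarrow> (real \<Rightarrow> complex) \<Rightarrow> bool" where
  "B1_pair I u v \<longleftrightarrow> L2_on I u \<and> L2_on I v \<and> weak_deriv_on I u v \<and>
     L2_on I (\<lambda>t. complex_of_real t * u t)"

definition mu :: "real \<Rightarrow> real \<Rightarrow> real" where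
  "mu a \<xi> = Inf {(LINT t|lborel. (cmod (v t))\<^sup>2 + (\<xi> + sigma a t * t)\<^sup>2 * (cmod (u t))\<^sup>2)
                 / (LINT t|lborel. (cmod (u t))\<^sup>2) | u v.
                 B1_pair UNIV u v \<and> (LINT t|lborel. (cmod (u t))\<^sup>2) \<noteq> 0}"

definition beta :: "real \<Rightarrow> real" where
  "beta a = Inf (range (mu a))"

text \<open>Lowest eigenvalue of the Neumann realization on R_+ (variational characterization,
  form domain B^1(R_+) with no boundary condition).\<close>
definition lambdaN :: "real \<Rightarrow> real" where
  "lambdaN \<xi> = Inf {(LINT t:{0<..}|lborel. (cmod (v t))\<^sup>2 + (t + \<xi>)\<^sup>2 * (cmod (u t))\<^sup>2)
                 / (LINT t:{0<..}|lborel. (cmod (u t))\<^sup>2) | u v.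
                 B1_pair {0<..} u v \<and> (LINT t:{0<..}|lborel. (cmod (u t))\<^sup>2) \<noteq> 0}"

definition Theta0 :: real where
  "Theta0 = Inf (range lambdaN)"

end

theory Submission
  imports Defs
begin

lemma deriv_zero_outside:
  fixes \<phi> :: "real \<Rightarrow> real"
  assumes "open S" "x \<in> S" "\<And>y. y \<in> S \<Longrightarrow> \<phi> y = 0"
  shows "deriv \<phi> x = 0"
proof -
  have "((\<lambda>_. 0::real) has_real_derivative 0) (at x)" by simp
  then have "(\<phi> has_real_derivative 0) (at x)"
    by (rule has_field_derivative_transform_within_open[OF _ assms(1,2)]) (use assms(3) in auto)
  then show ?thesis by (rule DERIV_imp_deriv)
qed

lemma support_interval:
  fixes \<phi> :: "real \<Rightarrow> real"
  assumes "compact K" "\<And>x. x \<notin> K \<Longrightarrow> \<phi> x = 0"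
  shows "\<exists>c d. c \<le> d \<and> (K = {} \<or> c \<in> K) \<and> (\<forall>x. x \<notin> {c..d} \<longrightarrow> \<phi> x = 0)
    \<and> (\<forall>x. x \<notin> {c..d} \<longrightarrow> deriv \<phi> x = 0)"
proof (cases "K = {}")
  case True
  then have "\<phi> = (\<lambda>_. 0)" using assms(2) by auto
  then show ?thesis using True by (intro exI[of _ 0]) auto
next
  case False
  obtain c where c: "c \<in> K" "\<And>t. t \<in> K \<Longrightarrow> c \<le> t" using compact_attains_inf[OF assms(1) False] by blast
  obtain d where d: "d \<in> K" "\<And>t. t \<in> K \<Longrightarrow> t \<le> d" using compact_attains_sup[OF assms(1) False] by blast
  have z: "\<phi> x = 0" if x: "x \<notin> {c..d}" for x using x c d assms(2) by (meson atLeastAtMost_iff)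
  have dz: "deriv \<phi> x = 0" if x: "x \<notin> {c..d}" for x
  proof (cases "x < c")
    case True
    show ?thesis
    proof (rule deriv_zero_outside[of "{..<c}"])
      show "\<phi> y = 0" if "y \<in> {..<c}" for y using that c(2) assms(2) by (meson lessThan_iff not_le)
    qed (use True in auto)
  next
    case False
    then have "x > d" using x by auto
    show ?thesis
    proof (rule deriv_zero_outside[of "{d<..}"])
      show "\<phi> y = 0" if "y \<in> {d<..}" for y using that d(2) assms(2) by (meson greaterThan_iff not_le)
    qed (use \<open>x > d\<close> in auto)
  qed
  have "c \<le> d" using c d by auto
  then show ?thesis using z dz c(1) by blast
qed

lemma test_onD:
  assumes "test_on I \<phi>"
  shows "\<And>x. (\<phi> has_real_derivative deriv \<phi> x) (at x)" "continuous_on UNIV (deriv \<phi>)"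
    "continuous_on UNIV \<phi>"
proof -
  show d: "(\<phi> has_real_derivative deriv \<phi> x) (at x)" for x
    using assms unfolding test_on_def by (simp add: DERIV_deriv_iff_real_differentiable)
  show "continuous_on UNIV (deriv \<phi>)" using assms unfolding test_on_def by auto
  show "continuous_on UNIV \<phi>"
    using d by (meson DERIV_isCont continuous_at_imp_continuous_on)
qed

lemma test_support_pos:
  assumes "test_on {0<..} \<phi>"
  obtains c d where "0 < c" "c \<le> d" "\<And>x. x \<notin> {c..d} \<Longrightarrow> \<phi> x = 0"
    "\<And>x. x \<notin> {c..d} \<Longrightarrow> deriv \<phi> x = 0"
proof -
  obtain K where K: "compact K" "K \<subseteq> {0<..}" "\<And>x. x \<notin> K \<Longrightarrow> \<phi> x = 0"
    using assms unfolding test_on_def by blast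
  have "\<exists>c d. c \<le> d \<and> (K = {} \<or> c \<in> K) \<and> (\<forall>x. x \<notin> {c..d} \<longrightarrow> \<phi> x = 0)
    \<and> (\<forall>x. x \<notin> {c..d} \<longrightarrow> deriv \<phi> x = 0)" by (rule support_interval[OF K(1) K(3)])
  then obtain c d where cd0: "c \<le> d \<and> (K = {} \<or> c \<in> K) \<and> (\<forall>x. x \<notin> {c..d} \<longrightarrow> \<phi> x = 0)
    \<and> (\<forall>x. x \<notin> {c..d} \<longrightarrow> deriv \<phi> x = 0)" by (elim exE)
  have cd: "c \<le> d" "K = {} \<or> c \<in> K" "\<And>x. x \<notin> {c..d} \<Longrightarrow> \<phi> x = 0"
    "\<And>x. x \<notin> {c..d} \<Longrightarrow> deriv \<phi> x = 0" using cd0 by auto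
  show ?thesis
  proof (cases "K = {}")
    case True
    then have "\<phi> = (\<lambda>_. 0)" using K(3) by auto
    then show ?thesis by (intro that[of 1 1]) auto
  next
    case False
    then have "c > 0" using cd(2) K(2) by auto
    show ?thesis by (rule that[OF \<open>c > 0\<close> cd(1) cd(3) cd(4)])
  qed
qed

lemma test_support_UNIV:
  assumes "test_on UNIV \<phi>"
  obtains c d where "c \<le> d" "\<And>x. x \<notin> {c..d} \<Longrightarrow> \<phi> x = 0"
    "\<And>x. x \<notin> {c..d} \<Longrightarrow> deriv \<phi> x = 0"
proof -
  obtain K where K: "compact K" "\<And>x. x \<notin> K \<Longrightarrow> \<phi> x = 0"
    using assms unfolding test_on_def by blast
  have "\<exists>c d. c \<le> d \<and> (K = {} \<or> c \<in> K) \<and> (\<forall>x. x \<notin> {c..d} \<longrightarrow> \<phi> x = 0)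
    \<and> (\<forall>x. x \<notin> {c..d} \<longrightarrow> deriv \<phi> x = 0)" by (rule support_interval[OF K])
  then obtain c d where cd0: "c \<le> d \<and> (K = {} \<or> c \<in> K) \<and> (\<forall>x. x \<notin> {c..d} \<longrightarrow> \<phi> x = 0)
    \<and> (\<forall>x. x \<notin> {c..d} \<longrightarrow> deriv \<phi> x = 0)" by (elim exE)
  have cd: "c \<le> d" "K = {} \<or> c \<in> K" "\<And>x. x \<notin> {c..d} \<Longrightarrow> \<phi> x = 0"
    "\<And>x. x \<notin> {c..d} \<Longrightarrow> deriv \<phi> x = 0" using cd0 by auto
  show ?thesis by (rule that[OF cd(1) cd(3) cd(4)])
qed

lemma cont_bound:
  fixes g :: "real \<Rightarrow> real"
  assumes "continuous_on UNIV g"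
  obtains B where "B \<ge> 0" "\<And>x. x \<in> {c..d} \<Longrightarrow> \<bar>g x\<bar> \<le> B"
proof -
  have "compact (g ` {c..d})"
    by (rule compact_continuous_image) (use assms continuous_on_subset in auto)
  then obtain B where "\<forall>y\<in>g ` {c..d}. norm y \<le> B" using compact_imp_bounded bounded_iff by metis
  then have "\<bar>g x\<bar> \<le> max B 0" if "x \<in> {c..d}" for x
  proof -
    have "norm (g x) \<le> B" using that \<open>\<forall>y\<in>g ` {c..d}. norm y \<le> B\<close> by auto
    then show ?thesis by simp
  qed
  then show ?thesis using that[of "max B 0"] by auto
qed

lemma set_int_norm:
  fixes v :: "real \<Rightarrow> complex"
  assumes "set_integrable lborel A v"
  shows "set_integrable lborel A (\<lambda>s. norm (v s))"
proof -
  have "integrable lborel (\<lambda>x. norm (indicator A x *\<^sub>R v x))"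
    using assms unfolding set_integrable_def by (rule integrable_norm)
  moreover have "(\<lambda>x. norm (indicator A x *\<^sub>R v x)) = (\<lambda>x. indicator A x *\<^sub>R norm (v x))"
    by (auto simp: indicator_def fun_eq_iff)
  ultimately show ?thesis unfolding set_integrable_def by simp
qed

lemma set_integrable_mult_cont:
  fixes v :: "real \<Rightarrow> complex"
  assumes v[measurable]: "v \<in> borel_measurable borel" and vi: "set_integrable lborel {c..d} v"
    and g: "continuous_on UNIV g"
  shows "set_integrable lborel {c..d} (\<lambda>s. v s * complex_of_real (g s))"
proof -
  have [measurable]: "g \<in> borel_measurable borel" using g by (rule borel_measurable_continuous_onI)
  obtain B where B: "B \<ge> 0" "\<And>x. x \<in> {c..d} \<Longrightarrow> \<bar>g x\<bar> \<le> B" using cont_bound[OF g] by blast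
  have "integrable lborel (\<lambda>s. B * norm (indicator {c..d} s *\<^sub>R v s))"
    using integrable_norm[OF vi[unfolded set_integrable_def]] by auto
  then show ?thesis unfolding set_integrable_def
  proof (rule Bochner_Integration.integrable_bound)
    show "AE x in lborel. norm (indicat_real {c..d} x *\<^sub>R (v x * complex_of_real (g x)))
        \<le> norm (B * norm (indicat_real {c..d} x *\<^sub>R v x))"
      using B by (auto simp: indicator_def norm_mult intro!: AE_I2) (simp add: mult.commute[of B] mult_left_mono)
  qed measurable
qed

lemma fubini_ibp:
  fixes v :: "real \<Rightarrow> complex" and \<phi> \<phi>' :: "real \<Rightarrow> real"
  assumes v[measurable]: "v \<in> borel_measurable borel"
    and vi: "set_integrable lborel {c..d} v" and cd: "c \<le> d"
    and D: "\<And>x. (\<phi> has_real_derivative \<phi>' x) (at x)" and cont: "continuous_on UNIV \<phi>'"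
  shows "(LINT x:{c..d}|lborel. complex_of_real (\<phi>' x) * (LINT s:{c..x}|lborel. v s)) =
         complex_of_real (\<phi> d) * (LINT s:{c..d}|lborel. v s) - (LINT s:{c..d}|lborel. v s * complex_of_real (\<phi> s))"
proof -
  have [measurable]: "\<phi>' \<in> borel_measurable borel" using cont by (rule borel_measurable_continuous_onI)
  have contphi: "continuous_on UNIV \<phi>" using D by (meson DERIV_isCont continuous_at_imp_continuous_on)
  have [measurable]: "\<phi> \<in> borel_measurable borel" using contphi by (rule borel_measurable_continuous_onI)
  obtain B where B: "B \<ge> 0" "\<And>x. x \<in> {c..d} \<Longrightarrow> \<bar>\<phi>' x\<bar> \<le> B" using cont_bound[OF cont] by blast
  define K where "K = (LINT s:{c..d}|lborel. norm (v s))"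
  define F where "F = (\<lambda>x s. if c \<le> s \<and> s \<le> x \<and> x \<le> d then complex_of_real (\<phi>' x) * v s else 0)"
  have Fm[measurable]: "(\<lambda>(x, s). F x s) \<in> borel_measurable (lborel \<Otimes>\<^sub>M lborel)"
    unfolding F_def by measurable
  have vni: "set_integrable lborel {c..d} (\<lambda>s. norm (v s))"
    using vi by (rule set_int_norm)
  have vsub: "set_integrable lborel {c..x} v" if "x \<le> d" for x
    by (rule set_integrable_subset[OF vi]) (use that in auto)
  have vnsub: "set_integrable lborel {c..x} (\<lambda>s. norm (v s))" if "x \<le> d" for x
    by (rule set_integrable_subset[OF vni]) (use that in auto)
  have Fx: "F x = (\<lambda>s. if c \<le> x \<and> x \<le> d then complex_of_real (\<phi>' x) * (indicator {c..x} s *\<^sub>R v s) else 0)" for x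
    unfolding F_def by (auto simp: indicator_def)
  have Fs: "(\<lambda>x. F x s) = (\<lambda>x. if c \<le> s \<and> s \<le> d then (indicator {s..d} x * \<phi>' x) *\<^sub>R v s else 0)" for s
    unfolding F_def by (auto simp: indicator_def scaleR_conv_of_real)
  have int2: "integrable lborel (F x)" for x
  proof (cases "c \<le> x \<and> x \<le> d")
    case True
    then have "F x = (\<lambda>s. complex_of_real (\<phi>' x) * (indicator {c..x} s *\<^sub>R v s))" unfolding Fx by simp
    moreover have "set_integrable lborel {c..x} v" using True by (intro vsub) auto
    ultimately show ?thesis unfolding set_integrable_def by (simp only:) (rule integrable_mult_right)
  next
    case False
    then have "F x = (\<lambda>s. 0)" unfolding Fx by auto
    then show ?thesis by simp
  qed
  have intFx: "(LINT s|lborel. F x s) = indicator {c..d} x *\<^sub>R (complex_of_real (\<phi>' x) * (LINT s:{c..x}|lborel. v s))" for x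
  proof (cases "c \<le> x \<and> x \<le> d")
    case True
    then have "F x = (\<lambda>s. complex_of_real (\<phi>' x) * (indicator {c..x} s *\<^sub>R v s))" unfolding Fx by simp
    then have "(LINT s|lborel. F x s) = complex_of_real (\<phi>' x) * (LINT s|lborel. indicator {c..x} s *\<^sub>R v s)"
      by (simp only: integral_mult_right_zero)
    then show ?thesis using True by (simp add: set_lebesgue_integral_def)
  next
    case False
    then have "F x = (\<lambda>s. 0)" unfolding Fx by auto
    then show ?thesis using False by simp
  qed
  have normFx: "(LINT s|lborel. norm (F x s)) = indicator {c..d} x * (\<bar>\<phi>' x\<bar> * (LINT s:{c..x}|lborel. norm (v s)))" for x
  proof (cases "c \<le> x \<and> x \<le> d")
    case True
    then have "(\<lambda>s. norm (F x s)) = (\<lambda>s. \<bar>\<phi>' x\<bar> * (indicator {c..x} s *\<^sub>R norm (v s)))"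
      unfolding Fx by (auto simp: indicator_def norm_mult fun_eq_iff)
    then have "(LINT s|lborel. norm (F x s)) = \<bar>\<phi>' x\<bar> * (LINT s|lborel. indicator {c..x} s *\<^sub>R norm (v s))"
      by (simp only: integral_mult_right_zero)
    then show ?thesis using True by (simp add: set_lebesgue_integral_def)
  next
    case False
    then have "F x = (\<lambda>s. 0)" unfolding Fx by auto
    then show ?thesis using False by simp
  qed
  have int1: "integrable lborel (\<lambda>x. LINT s|lborel. norm (F x s))"
  proof (rule Bochner_Integration.integrable_bound)
    show "integrable lborel (\<lambda>x. indicator {c..d} x * (B * K))"
      by (intro integrable_mult_left integrable_real_indicator) (auto simp: emeasure_lborel_Icc cd)
    show "(\<lambda>x. LINT s|lborel. norm (F x s)) \<in> borel_measurable lborel"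
      by (rule lborel.borel_measurable_lebesgue_integral) measurable
    show "AE x in lborel. norm (LINT s|lborel. norm (F x s)) \<le> norm (indicator {c..d} x * (B * K))"
    proof (intro AE_I2)
      fix x
      show "norm (LINT s|lborel. norm (F x s)) \<le> norm (indicator {c..d} x * (B * K))"
      proof (cases "x \<in> {c..d}")
        case True
        have "(LINT s:{c..x}|lborel. norm (v s)) \<le> K"
          unfolding K_def set_lebesgue_integral_def
          by (rule integral_mono) (use True vnsub vni in \<open>auto simp: set_integrable_def indicator_def\<close>)
        moreover have "0 \<le> (LINT s:{c..x}|lborel. norm (v s))"
          unfolding set_lebesgue_integral_def by (rule integral_nonneg_AE) (auto simp: indicator_def)
        ultimately have "\<bar>\<phi>' x\<bar> * (LINT s:{c..x}|lborel. norm (v s)) \<le> B * K"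
          using B True by (intro mult_mono) auto
        moreover have "0 \<le> \<bar>\<phi>' x\<bar> * (LINT s:{c..x}|lborel. norm (v s))"
          using \<open>0 \<le> (LINT s:{c..x}|lborel. norm (v s))\<close> by simp
        ultimately show ?thesis using True unfolding normFx by auto
      qed (simp add: normFx)
    qed
  qed
  have Fint: "integrable (lborel \<Otimes>\<^sub>M lborel) (\<lambda>(x, s). F x s)"
    by (rule lborel_pair.Fubini_integrable[OF Fm]) (use int1 int2 in auto)
  have fub: "(LBINT s. LBINT x. F x s) = (LBINT x. LBINT s. F x s)"
    by (rule lborel_pair.Fubini_integral[OF Fint])
  have intFs: "(LBINT x. F x s) = indicator {c..d} s *\<^sub>R (complex_of_real (\<phi> d - \<phi> s) * v s)" for s
  proof (cases "c \<le> s \<and> s \<le> d")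
    case True
    have "(LBINT x. indicator {s..d} x * \<phi>' x) = \<phi> d - \<phi> s"
      using integral_FTC_Icc_real[of s d \<phi> \<phi>'] True D cont
      by (auto simp: mult.commute continuous_on_eq_continuous_at)
    then have "(LBINT x. (indicator {s..d} x * \<phi>' x) *\<^sub>R v s) = (\<phi> d - \<phi> s) *\<^sub>R v s"
    proof -
      have "set_integrable lborel {s..d} \<phi>'"
        by (rule borel_integrable_atLeastAtMost') (use cont continuous_on_subset in blast)
      then have ii: "integrable lborel (\<lambda>x. indicator {s..d} x * \<phi>' x)"
        unfolding set_integrable_def by simp
      show ?thesis using \<open>(LBINT x. indicator {s..d} x * \<phi>' x) = \<phi> d - \<phi> s\<close> ii
        by (subst integral_scaleR_left) auto
    qed
    then show ?thesis unfolding Fs using True by (simp add: scaleR_conv_of_real)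
  qed (auto simp: Fs)
  have "(LINT x:{c..d}|lborel. complex_of_real (\<phi>' x) * (LINT s:{c..x}|lborel. v s)) = (LBINT x. LBINT s. F x s)"
    unfolding intFx set_lebesgue_integral_def ..
  also have "\<dots> = (LBINT s. indicator {c..d} s *\<^sub>R (complex_of_real (\<phi> d - \<phi> s) * v s))"
    unfolding fub[symmetric] intFs ..
  also have "\<dots> = (LINT s:{c..d}|lborel. complex_of_real (\<phi> d) * v s - v s * complex_of_real (\<phi> s))"
    unfolding set_lebesgue_integral_def by (rule Bochner_Integration.integral_cong) (auto simp: algebra_simps)
  also have "\<dots> = (LINT s:{c..d}|lborel. complex_of_real (\<phi> d) * v s) - (LINT s:{c..d}|lborel. v s * complex_of_real (\<phi> s))"
    by (rule set_integral_diff) (use vi set_integrable_mult_cont[OF v vi contphi] in auto)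
  also have "\<dots> = complex_of_real (\<phi> d) * (LINT s:{c..d}|lborel. v s) - (LINT s:{c..d}|lborel. v s * complex_of_real (\<phi> s))"
    by simp
  finally show ?thesis .
qed

lemma antideriv_test:
  fixes g :: "real \<Rightarrow> real"
  assumes g: "continuous_on UNIV g" and cd: "0 < c" "c \<le> d"
    and supp: "\<And>x. x \<notin> {c..d} \<Longrightarrow> g x = 0" and int0: "integral {c..d} g = 0"
  shows "\<exists>\<phi>. test_on {0<..} \<phi> \<and> (\<forall>x. deriv \<phi> x = g x)"
proof -
  define \<phi> where "\<phi> = (\<lambda>x. integral {c-1..x} g)"
  have zero_left: "\<phi> y = 0" if "y < c" for y
  proof -
    have "integral {c-1..y} g = integral {c-1..y} (\<lambda>_. 0::real)"
      by (rule integral_cong) (use supp that in auto)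
    then show ?thesis unfolding \<phi>_def by simp
  qed
  have contg: "continuous_on {a..b} g" for a b using g continuous_on_subset by blast
  have zero_right: "\<phi> y = 0" if "y > d" for y
  proof -
    have "integral {c-1..y} g = integral {c-1..c} g + integral {c..y} g"
      using Henstock_Kurzweil_Integration.integral_combine[where a="c-1" and c=c and b=y and f=g] cd that integrable_continuous_real[OF contg] by auto
    also have "integral {c..y} g = integral {c..d} g + integral {d..y} g"
      using Henstock_Kurzweil_Integration.integral_combine[where a=c and c=d and b=y and f=g] cd that integrable_continuous_real[OF contg] by auto
    also have "integral {c-1..c} g = integral {c-1..c} (\<lambda>_. 0::real)"
    proof (rule integral_spike[where S="{c}"])
      show "negligible {c}" by simp
    qed (use supp in auto)
    also have "integral {d..y} g = integral {d..y} (\<lambda>_. 0::real)"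
    proof (rule integral_spike[where S="{d}"])
      show "negligible {d}" by simp
    qed (use supp in auto)
    finally show ?thesis unfolding \<phi>_def using int0 by simp
  qed
  have D: "(\<phi> has_real_derivative g x) (at x)" for x
  proof (cases "x < c")
    case True
    have "((\<lambda>_. 0) has_real_derivative g x) (at x)" using supp True by auto
    then show ?thesis
      by (rule has_field_derivative_transform_within_open[of _ _ _ "{..<c}"]) (use True zero_left in auto)
  next
    case False
    define b where "b = max x d + 1"
    have "((\<lambda>u. integral {c-1..u} g) has_vector_derivative g x) (at x within {c-1..b})"
      by (rule integral_has_vector_derivative[OF contg]) (use False cd in \<open>auto simp: b_def\<close>)
    moreover have "at x within {c-1..b} = at x"
      by (rule at_within_Icc_at) (use False cd in \<open>auto simp: b_def\<close>)
    ultimately show ?thesis unfolding \<phi>_def by (simp add: has_real_derivative_iff_has_vector_derivative)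
  qed
  have dg: "deriv \<phi> x = g x" for x using D by (rule DERIV_imp_deriv)
  have "test_on {0<..} \<phi>"
    unfolding test_on_def
  proof (intro conjI allI exI[of _ "{c..d}"])
    show "\<phi> differentiable at x" for x using D[of x] dg[of x] DERIV_deriv_iff_real_differentiable by metis
    show "continuous_on UNIV (deriv \<phi>)" using g dg by (simp add: fun_eq_iff[symmetric] )
    show "compact {c..d}" by simp
    show "{c..d} \<subseteq> {0<..}" using cd by auto
    show "x \<notin> {c..d} \<longrightarrow> \<phi> x = 0" for x using zero_left zero_right by force
  qed
  then show ?thesis using dg by blast
qed

lemma dct_interval:
  fixes f :: "real \<Rightarrow> complex"
  assumes f[measurable]: "f \<in> borel_measurable borel"
    and loc: "\<And>c d. 0 < c \<Longrightarrow> set_integrable lborel {c..d} f"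
    and H: "\<And>g c d. continuous_on UNIV g \<Longrightarrow> 0 < c \<Longrightarrow> c \<le> d \<Longrightarrow> (\<And>x. x \<notin> {c..d} \<Longrightarrow> g x = 0)
              \<Longrightarrow> (LBINT t. f t * complex_of_real (g t)) = 0"
    and x: "0 < x" "x < R"
  shows "(LINT t:{x<..<R}|lborel. f t) = 0"
proof -
  define g where "g n t = max 0 (min 1 (real (Suc n) * (t - x))) * max 0 (min 1 (real (Suc n) * (R - t)))" for n t
  have gc: "continuous_on UNIV (g n)" for n unfolding g_def by (intro continuous_intros)
  have gs: "g n t = 0" if "t \<notin> {x..R}" for n t
  proof (cases "t < x")
    case True
    then have "real (Suc n) * (t - x) < 0" by (simp add: mult_pos_neg)
    then show ?thesis unfolding g_def by simp
  next
    case False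
    then have "t > R" using that by auto
    then have "real (Suc n) * (R - t) < 0" by (simp add: mult_pos_neg)
    then show ?thesis unfolding g_def by simp
  qed
  have g01: "0 \<le> g n t \<and> g n t \<le> 1" for n t unfolding g_def by (auto intro: mult_le_one)
  have zero: "(LBINT t. f t * complex_of_real (g n t)) = 0" for n
  proof (rule H[OF gc x(1)])
    show "x \<le> R" using x by simp
    show "g n y = 0" if "y \<notin> {x..R}" for y using gs[OF that] .
  qed
  have w: "integrable lborel (\<lambda>t. indicator {x..R} t * norm (f t))"
    using set_int_norm[OF loc[OF x(1), of R]] unfolding set_integrable_def by simp
  have lim: "(\<lambda>n. LBINT t. f t * complex_of_real (g n t)) \<longlonglongrightarrow> (LBINT t. indicator {x<..<R} t *\<^sub>R f t)"
  proof (rule integral_dominated_convergence[OF _ _ w])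
    show "(\<lambda>t. indicator {x<..<R} t *\<^sub>R f t) \<in> borel_measurable lborel" by measurable
    show "(\<lambda>t. f t * complex_of_real (g n t)) \<in> borel_measurable lborel" for n
      using gc[of n] by (measurable, rule borel_measurable_continuous_onI)
    show "AE t in lborel. norm (f t * complex_of_real (g n t)) \<le> indicator {x..R} t * norm (f t)" for n
    proof (intro AE_I2)
      fix t
      show "norm (f t * complex_of_real (g n t)) \<le> indicator {x..R} t * norm (f t)"
      proof (cases "t \<in> {x..R}")
        case True
        then show ?thesis using g01[of n t] by (auto simp: norm_mult intro: mult_left_le)
      qed (simp add: gs)
    qed
    show "AE t in lborel. (\<lambda>n. f t * complex_of_real (g n t)) \<longlonglongrightarrow> indicator {x<..<R} t *\<^sub>R f t"
    proof (intro AE_I2)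
      fix t
      show "(\<lambda>n. f t * complex_of_real (g n t)) \<longlonglongrightarrow> indicator {x<..<R} t *\<^sub>R f t"
      proof (cases "t \<in> {x<..<R}")
        case True
        then have pos: "0 < min (t - x) (R - t)" by auto
        obtain N where N: "1 < real N * min (t - x) (R - t)" using ex_less_of_nat_mult[OF pos] by blast
        have "eventually (\<lambda>n. f t * complex_of_real (g n t) = f t) sequentially"
        proof (rule eventually_sequentiallyI[of N])
          fix n assume "N \<le> n"
          then have "real N \<le> real (Suc n)" by simp
          then have "real N * min (t - x) (R - t) \<le> real (Suc n) * min (t - x) (R - t)"
            using pos by (intro mult_right_mono) auto
          moreover have "real (Suc n) * min (t - x) (R - t) \<le> real (Suc n) * (t - x)"
            by (intro mult_left_mono) auto
          moreover have "real (Suc n) * min (t - x) (R - t) \<le> real (Suc n) * (R - t)"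
            by (intro mult_left_mono) auto
          ultimately have "1 \<le> real (Suc n) * (t - x)" "1 \<le> real (Suc n) * (R - t)"
            using N by linarith+
          then have "g n t = 1" unfolding g_def by simp
          then show "f t * complex_of_real (g n t) = f t" by simp
        qed
        then have "(\<lambda>n. f t * complex_of_real (g n t)) \<longlonglongrightarrow> f t"
          by (rule tendsto_eventually)
        then show ?thesis using True by simp
      next
        case False
        have "g n t = 0" for n
        proof (cases "t \<in> {x..R}")
          case True
          then have "t = x \<or> t = R" using False by auto
          then show ?thesis unfolding g_def by auto
        qed (simp add: gs)
        then show ?thesis using False by simp
      qed
    qed
  qed
  then have "(\<lambda>n. 0) \<longlonglongrightarrow> (LBINT t. indicator {x<..<R} t *\<^sub>R f t)" using zero by simp
  then have "(LBINT t. indicator {x<..<R} t *\<^sub>R f t) = 0" using LIMSEQ_unique tendsto_const by blast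
  then show ?thesis unfolding set_lebesgue_integral_def .
qed

lemma ae_zero_from_tails:
  fixes f :: "real \<Rightarrow> real"
  assumes f: "integrable lborel f" and H: "\<And>y. (LINT t:{y<..}|lborel. f t) = 0"
  shows "AE t in lborel. f t = 0"
proof -
  have fm[measurable]: "f \<in> borel_measurable borel" using borel_measurable_integrable[OF f] by simp
  define P where "P t = ennreal (max 0 (f t))" for t
  define Q where "Q t = ennreal (max 0 (- f t))" for t
  have [measurable]: "P \<in> borel_measurable borel" "Q \<in> borel_measurable borel" unfolding P_def Q_def by measurable
  have ip: "integrable lborel (\<lambda>t. indicator {y<..} t * max 0 (f t))" for y
    using integrable_mult_indicator[of "{y<..}" lborel "\<lambda>t. max 0 (f t)"] f by auto
  have iq: "integrable lborel (\<lambda>t. indicator {y<..} t * max 0 (- f t))" for y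
    using integrable_mult_indicator[of "{y<..}" lborel "\<lambda>t. max 0 (- f t)"] f by auto
  have eP: "emeasure (density lborel P) {y<..} = ennreal (LBINT t. indicator {y<..} t * max 0 (f t))" for y
  proof -
    have "emeasure (density lborel P) {y<..} = (\<integral>\<^sup>+ t. P t * indicator {y<..} t \<partial>lborel)"
      by (rule emeasure_density) auto
    also have "\<dots> = (\<integral>\<^sup>+ t. ennreal (indicator {y<..} t * max 0 (f t)) \<partial>lborel)"
      unfolding P_def by (intro nn_integral_cong) (auto simp: indicator_def)
    also have "\<dots> = ennreal (LBINT t. indicator {y<..} t * max 0 (f t))"
      by (rule nn_integral_eq_integral[OF ip]) auto
    finally show ?thesis .
  qed
  have eQ: "emeasure (density lborel Q) {y<..} = ennreal (LBINT t. indicator {y<..} t * max 0 (- f t))" for y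
  proof -
    have "emeasure (density lborel Q) {y<..} = (\<integral>\<^sup>+ t. Q t * indicator {y<..} t \<partial>lborel)"
      by (rule emeasure_density) auto
    also have "\<dots> = (\<integral>\<^sup>+ t. ennreal (indicator {y<..} t * max 0 (- f t)) \<partial>lborel)"
      unfolding Q_def by (intro nn_integral_cong) (auto simp: indicator_def)
    also have "\<dots> = ennreal (LBINT t. indicator {y<..} t * max 0 (- f t))"
      by (rule nn_integral_eq_integral[OF iq]) auto
    finally show ?thesis .
  qed
  have "(LBINT t. indicator {y<..} t * max 0 (f t)) - (LBINT t. indicator {y<..} t * max 0 (- f t))
      = (LBINT t. indicator {y<..} t * max 0 (f t) - indicator {y<..} t * max 0 (- f t))" for y
    by (rule Bochner_Integration.integral_diff[symmetric, OF ip iq])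
  also have "\<dots>y = (LINT t:{y<..}|lborel. f t)" for y
    unfolding set_lebesgue_integral_def by (intro Bochner_Integration.integral_cong) (auto simp: indicator_def)
  finally have same: "(LBINT t. indicator {y<..} t * max 0 (f t)) = (LBINT t. indicator {y<..} t * max 0 (- f t))" for y
    using H by simp
  have "density lborel P = density lborel Q"
  proof (rule measure_eqI_lessThan)
    show "emeasure (density lborel P) {x<..} < \<infinity>" for x unfolding eP by simp
    show "emeasure (density lborel P) {x<..} = emeasure (density lborel Q) {x<..}" for x
      unfolding eP eQ same ..
  qed auto
  then have "AE t in lborel. P t = Q t"
    by (intro sigma_finite_measure.density_unique[OF lborel.sigma_finite_measure_axioms]) auto
  then show ?thesis
  proof (rule AE_mp, intro AE_I2 impI)
    fix t assume "P t = Q t"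
    then have "max 0 (f t) = max 0 (- f t)" unfolding P_def Q_def by (simp add: ennreal_inj)
    then show "f t = 0" by (auto simp: max_def split: if_splits)
  qed
qed

lemma fund_lemma:
  fixes f :: "real \<Rightarrow> complex"
  assumes f[measurable]: "f \<in> borel_measurable borel"
    and loc: "\<And>c d. 0 < c \<Longrightarrow> set_integrable lborel {c..d} f"
    and H: "\<And>g c d. continuous_on UNIV g \<Longrightarrow> 0 < c \<Longrightarrow> c \<le> d \<Longrightarrow> (\<And>x. x \<notin> {c..d} \<Longrightarrow> g x = 0)
              \<Longrightarrow> (LBINT t. f t * complex_of_real (g t)) = 0"
  shows "AE t in lborel. 0 < t \<longrightarrow> f t = 0"
proof -
  have I0: "(LINT t:{x<..<R}|lborel. f t) = 0" if "0 < x" "x < R" for x R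
    by (rule dct_interval[OF f loc H that]) auto
  have each: "AE t in lborel. e < t \<and> t < R \<longrightarrow> f t = 0" if e: "0 < e" for e R
  proof -
    define h where "h t = indicator {e<..<R} t *\<^sub>R f t" for t
    have hi: "integrable lborel h"
    proof -
      have "set_integrable lborel {e<..<R} f"
        by (rule set_integrable_subset[OF loc[OF e, of R]]) auto
      then show ?thesis unfolding h_def set_integrable_def .
    qed
    have tails: "(LINT t:{y<..}|lborel. h t) = 0" for y
    proof -
      have "(LINT t:{y<..}|lborel. h t) = (LINT t:{max y e<..<R}|lborel. f t)"
        unfolding set_lebesgue_integral_def h_def
        by (intro Bochner_Integration.integral_cong) (auto simp: indicator_def)
      also have "\<dots> = 0"
      proof (cases "max y e < R")
        case True
        then show ?thesis using I0[of "max y e" R] e by auto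
      next
        case False
        then have "{max y e<..<R} = {}" by auto
        then show ?thesis by (simp add: set_lebesgue_integral_def)
      qed
      finally show ?thesis .
    qed
    have hyi: "integrable lborel (\<lambda>t. indicator {y<..} t *\<^sub>R h t)" for y
      using integrable_mult_indicator[OF _ hi] by auto
    have "AE t in lborel. Re (h t) = 0"
    proof (rule ae_zero_from_tails)
      show "integrable lborel (\<lambda>t. Re (h t))" using hi by (rule integrable_Re)
      fix y
      have "(LINT t:{y<..}|lborel. Re (h t)) = Re (LINT t:{y<..}|lborel. h t)"
        unfolding set_lebesgue_integral_def using integral_Re[OF hyi[of y]] by simp
      then show "(LINT t:{y<..}|lborel. Re (h t)) = 0" using tails by simp
    qed
    moreover have "AE t in lborel. Im (h t) = 0"
    proof (rule ae_zero_from_tails)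
      show "integrable lborel (\<lambda>t. Im (h t))" using hi by (rule integrable_Im)
      fix y
      have "(LINT t:{y<..}|lborel. Im (h t)) = Im (LINT t:{y<..}|lborel. h t)"
        unfolding set_lebesgue_integral_def using integral_Im[OF hyi[of y]] by simp
      then show "(LINT t:{y<..}|lborel. Im (h t)) = 0" using tails by simp
    qed
    ultimately show ?thesis
      by eventually_elim (auto simp: h_def complex_eq_iff indicator_def split: if_splits)
  qed
  have "AE t in lborel. \<forall>n. inverse (real (Suc n)) < t \<and> t < real (Suc n) \<longrightarrow> f t = 0"
    unfolding AE_all_countable using each by auto
  then show ?thesis
  proof (rule AE_mp, intro AE_I2 impI)
    fix t :: real assume A: "\<forall>n. inverse (real (Suc n)) < t \<and> t < real (Suc n) \<longrightarrow> f t = 0" and t: "0 < t"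
    obtain n1 where n1: "inverse (real (Suc n1)) < t" using reals_Archimedean[OF t] by blast
    obtain n2 where n2: "t < real n2" using reals_Archimedean2 by blast
    define n where "n = max n1 n2"
    have "inverse (real (Suc n)) \<le> inverse (real (Suc n1))" unfolding n_def
      by (intro le_imp_inverse_le) auto
    moreover have "real n2 < real (Suc n)" unfolding n_def by simp
    ultimately show "f t = 0" using A n1 n2 by (meson le_less_trans less_trans)
  qed
qed

lemma cont_supp_integrable:
  fixes g :: "real \<Rightarrow> real"
  assumes g: "continuous_on UNIV g" and supp: "\<And>x. x \<notin> {c..d} \<Longrightarrow> g x = 0"
  shows "integrable lborel g" "(LBINT t. g t) = integral {c..d} g"
proof -
  have eq: "g = (\<lambda>t. indicator {c..d} t *\<^sub>R g t)" using supp by (auto simp: indicator_def fun_eq_iff)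
  have si: "set_integrable lborel {c..d} g"
    by (rule borel_integrable_atLeastAtMost') (use g continuous_on_subset in blast)
  then show "integrable lborel g" unfolding set_integrable_def by (subst eq) 
  have "(LBINT t. g t) = (LINT t:{c..d}|lborel. g t)" unfolding set_lebesgue_integral_def by (subst eq) simp
  also have "\<dots> = integral {c..d} g" by (rule set_borel_integral_eq_integral(2)[OF si])
  finally show "(LBINT t. g t) = integral {c..d} g" .
qed

lemma int_mult_supp:
  fixes f :: "real \<Rightarrow> complex" and g :: "real \<Rightarrow> real"
  assumes f[measurable]: "f \<in> borel_measurable borel" and fi: "set_integrable lborel {c..d} f"
    and g: "continuous_on UNIV g" and supp: "\<And>x. x \<notin> {c..d} \<Longrightarrow> g x = 0"
  shows "integrable lborel (\<lambda>t. f t * complex_of_real (g t))"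
    "(LBINT t. f t * complex_of_real (g t)) = (LINT t:{c..d}|lborel. f t * complex_of_real (g t))"
proof -
  have eq: "(\<lambda>t. f t * complex_of_real (g t)) = (\<lambda>t. indicator {c..d} t *\<^sub>R (f t * complex_of_real (g t)))"
    using supp by (auto simp: indicator_def fun_eq_iff)
  show "integrable lborel (\<lambda>t. f t * complex_of_real (g t))"
    using set_integrable_mult_cont[OF f fi g] unfolding set_integrable_def by (subst eq)
  show "(LBINT t. f t * complex_of_real (g t)) = (LINT t:{c..d}|lborel. f t * complex_of_real (g t))"
    unfolding set_lebesgue_integral_def by (subst eq) simp
qed

lemma L2_locint:
  fixes u :: "real \<Rightarrow> complex"
  assumes u[measurable]: "u \<in> borel_measurable borel" and u2: "integrable lborel (\<lambda>t. (cmod (u t))\<^sup>2)"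
  shows "set_integrable lborel {c..d} u"
  unfolding set_integrable_def
proof (rule Bochner_Integration.integrable_bound)
  show "integrable lborel (\<lambda>t. indicator {c..d} t + (cmod (u t))\<^sup>2)"
    using u2 by (intro Bochner_Integration.integrable_add integrable_real_indicator)
       (auto simp: emeasure_lborel_Icc_eq)
  show "AE t in lborel. norm (indicator {c..d} t *\<^sub>R u t) \<le> norm (indicator {c..d} t + (cmod (u t))\<^sup>2)"
  proof (intro AE_I2)
    fix t
    have "0 \<le> (cmod (u t) - 1)\<^sup>2" by simp
    then have "2 * cmod (u t) \<le> (cmod (u t))\<^sup>2 + 1" by (simp add: power2_diff)
    moreover have "0 \<le> (cmod (u t))\<^sup>2" by simp
    ultimately have "cmod (u t) \<le> 1 + (cmod (u t))\<^sup>2" by linarith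
    then show "norm (indicator {c..d} t *\<^sub>R u t) \<le> norm (indicator {c..d} t + (cmod (u t))\<^sup>2)"
      by (auto simp: indicator_def)
  qed
qed measurable

definition hat0 :: "real \<Rightarrow> real" where
  "hat0 t = max 0 (1/2 - \<bar>t - 3/2\<bar>)"

lemma hat0_props: "continuous_on UNIV hat0" "\<And>x. x \<notin> {1..2} \<Longrightarrow> hat0 x = 0" "\<And>x. hat0 x \<ge> 0"
  "integral {1..2} hat0 > 0"
proof -
  show c: "continuous_on UNIV hat0" unfolding hat0_def by (intro continuous_intros)
  show z: "hat0 x = 0" if "x \<notin> {1..2}" for x using that unfolding hat0_def by auto
  show "hat0 x \<ge> 0" for x unfolding hat0_def by auto
  have ge: "integral {1..2} hat0 \<ge> 0"
    by (rule integral_nonneg) (auto simp: hat0_def intro!: integrable_continuous_real continuous_intros)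
  have "integral {1..2} hat0 \<noteq> 0"
  proof
    assume "integral {1..2} hat0 = 0"
    then have "\<forall>x\<in>{1..2}. hat0 x = 0"
      by (subst (asm) integral_eq_0_iff) (auto simp: hat0_def intro!: continuous_intros)
    then have "hat0 (3/2) = 0" by auto
    then show False unfolding hat0_def by simp
  qed
  with ge show "integral {1..2} hat0 > 0" by simp
qed

lemma representative:
  fixes u v :: "real \<Rightarrow> complex"
  assumes u[measurable]: "u \<in> borel_measurable borel" and v[measurable]: "v \<in> borel_measurable borel"
    and u2: "integrable lborel (\<lambda>t. (cmod (u t))\<^sup>2)" and v2: "integrable lborel (\<lambda>t. (cmod (v t))\<^sup>2)"
    and wd: "\<And>\<phi>. test_on {0<..} \<phi> \<Longrightarrow> (LINT x:{0<..}|lborel. u x * complex_of_real (deriv \<phi> x))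
              = - (LINT x:{0<..}|lborel. v x * complex_of_real (\<phi> x))"
  shows "\<exists>C. AE t in lborel. 0 < t \<longrightarrow> u t = C + (LINT s:{0..t}|lborel. v s)"
proof -
  define U where "U x = (LINT s:{0..x}|lborel. v s)" for x
  have uloc: "set_integrable lborel {c..d} u" for c d by (rule L2_locint[OF u u2])
  have vloc: "set_integrable lborel {c..d} v" for c d by (rule L2_locint[OF v v2])
  have Um[measurable]: "U \<in> borel_measurable borel"
  proof -
    have "(\<lambda>x. LBINT s. (if 0 \<le> s \<and> s \<le> x then v s else 0)) \<in> borel_measurable lborel"
      by (rule lborel.borel_measurable_lebesgue_integral) measurable
    moreover have "U = (\<lambda>x. LBINT s. (if 0 \<le> s \<and> s \<le> x then v s else 0))"
      unfolding U_def set_lebesgue_integral_def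
      by (intro ext Bochner_Integration.integral_cong) (auto simp: indicator_def)
    ultimately show ?thesis by simp
  qed
  have Ucont: "continuous_on {0..d} U" for d
  proof -
    have "continuous_on {0..d} (\<lambda>x. integral {0..x} v)"
      by (rule indefinite_integral_continuous_1) (rule set_borel_integral_eq_integral(1)[OF vloc])
    moreover have "U x = integral {0..x} v" for x
      using set_borel_integral_eq_integral(2)[OF vloc] unfolding U_def by simp
    ultimately show ?thesis by simp
  qed
  have Uloc: "set_integrable lborel {c..d} U" if "0 \<le> c" for c d
    by (rule borel_integrable_atLeastAtMost') (use Ucont[of d] that continuous_on_subset in \<open>fastforce\<close>)
  define w where "w t = u t - U t" for t
  have wm[measurable]: "w \<in> borel_measurable borel" unfolding w_def by measurable
  have wloc: "set_integrable lborel {c..d} w" if "0 \<le> c" for c d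
    unfolding w_def by (rule set_integral_diff(1)[OF uloc Uloc[OF that]])
  have R1: "(LBINT t. w t * complex_of_real (deriv \<phi> t)) = 0" if \<phi>: "test_on {0<..} \<phi>" for \<phi>
  proof -
    obtain c d where cd: "0 < c" "c \<le> d" "\<And>x. x \<notin> {c..d} \<Longrightarrow> \<phi> x = 0"
      "\<And>x. x \<notin> {c..d} \<Longrightarrow> deriv \<phi> x = 0" using test_support_pos[OF \<phi>] by blast
    note D = test_onD(1)[OF \<phi>] and contd = test_onD(2)[OF \<phi>] and contp = test_onD(3)[OF \<phi>]
    have s1: "\<And>x. x \<notin> {0..d+1} \<Longrightarrow> deriv \<phi> x = 0" "\<And>x. x \<notin> {0..d+1} \<Longrightarrow> \<phi> x = 0"
      using cd by auto
    have eU: "(LBINT t. U t * complex_of_real (deriv \<phi> t)) = (LINT t:{0..d+1}|lborel. U t * complex_of_real (deriv \<phi> t))"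
      by (rule int_mult_supp(2)[OF Um Uloc contd s1(1)]) simp
    have eV: "(LBINT t. v t * complex_of_real (\<phi> t)) = (LINT t:{0..d+1}|lborel. v t * complex_of_real (\<phi> t))"
      by (rule int_mult_supp(2)[OF v vloc contp s1(2)])
    have fub: "(LINT x:{0..d+1}|lborel. complex_of_real (deriv \<phi> x) * (LINT s:{0..x}|lborel. v s)) =
         complex_of_real (\<phi> (d+1)) * (LINT s:{0..d+1}|lborel. v s) - (LINT s:{0..d+1}|lborel. v s * complex_of_real (\<phi> s))"
      by (rule fubini_ibp[OF v vloc _ D contd]) (use cd in auto)
    have "\<phi> (d+1) = 0" using cd by auto
    have eUV: "(LBINT t. U t * complex_of_real (deriv \<phi> t)) = - (LBINT t. v t * complex_of_real (\<phi> t))"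
    proof -
      have "(LBINT t. U t * complex_of_real (deriv \<phi> t)) = (LINT t:{0..d+1}|lborel. complex_of_real (deriv \<phi> t) * U t)"
        unfolding eU by (simp add: mult.commute)
      also have "\<dots> = - (LINT s:{0..d+1}|lborel. v s * complex_of_real (\<phi> s))"
        using fub \<open>\<phi> (d+1) = 0\<close> unfolding U_def by simp
      finally show ?thesis unfolding eV .
    qed
    have eu: "(LINT x:{0<..}|lborel. u x * complex_of_real (deriv \<phi> x)) = (LBINT t. u t * complex_of_real (deriv \<phi> t))"
      unfolding set_lebesgue_integral_def using cd by (intro Bochner_Integration.integral_cong) (auto simp: indicator_def)
    have ev: "(LINT x:{0<..}|lborel. v x * complex_of_real (\<phi> x)) = (LBINT t. v t * complex_of_real (\<phi> t))"
      unfolding set_lebesgue_integral_def using cd by (intro Bochner_Integration.integral_cong) (auto simp: indicator_def)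
    have iu: "integrable lborel (\<lambda>t. u t * complex_of_real (deriv \<phi> t))"
      by (rule int_mult_supp(1)[OF u uloc contd cd(4)])
    have iU: "integrable lborel (\<lambda>t. U t * complex_of_real (deriv \<phi> t))"
      by (rule int_mult_supp(1)[OF Um Uloc contd cd(4)]) (use cd in auto)
    have "(LBINT t. w t * complex_of_real (deriv \<phi> t)) =
        (LBINT t. u t * complex_of_real (deriv \<phi> t)) - (LBINT t. U t * complex_of_real (deriv \<phi> t))"
      unfolding w_def by (simp add: left_diff_distrib Bochner_Integration.integral_diff[OF iu iU])
    also have "\<dots> = 0" using wd[OF \<phi>] eu ev eUV by simp
    finally show ?thesis .
  qed
  have R2: "(LBINT t. w t * complex_of_real (g t)) = 0"
    if g: "continuous_on UNIV g" "0 < c" "c \<le> d" "\<And>x. x \<notin> {c..d} \<Longrightarrow> g x = 0" "(LBINT t. g t) = 0" for g c d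
  proof -
    have "integral {c..d} g = 0" using cont_supp_integrable(2)[OF g(1,4)] g(5) by simp
    then obtain \<phi> where \<phi>: "test_on {0<..} \<phi>" "\<And>x. deriv \<phi> x = g x"
      using antideriv_test[OF g(1-4)] by blast
    show ?thesis using R1[OF \<phi>(1)] \<phi>(2) by simp
  qed
  define I0 where "I0 = integral {1..2} hat0"
  have I0: "I0 > 0" unfolding I0_def by (rule hat0_props(4))
  define h0 where "h0 t = hat0 t / I0" for t
  have h0c: "continuous_on UNIV h0" unfolding h0_def using hat0_props(1) I0 by (intro continuous_intros) auto
  have h0s: "h0 x = 0" if "x \<notin> {1..2}" for x unfolding h0_def using hat0_props(2)[OF that] by simp
  have h0i: "integrable lborel h0" by (rule cont_supp_integrable(1)[OF h0c h0s])
  have h0int: "(LBINT t. h0 t) = 1"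
  proof -
    have "(LBINT t. hat0 t) = I0" unfolding I0_def by (rule cont_supp_integrable(2)[OF hat0_props(1,2)])
    then show ?thesis unfolding h0_def using I0 by simp
  qed
  define C where "C = (LBINT t. w t * complex_of_real (h0 t))"
  have R3: "(LBINT t. (w t - C) * complex_of_real (g t)) = 0"
    if g: "continuous_on UNIV g" "0 < c" "c \<le> d" "\<And>x. x \<notin> {c..d} \<Longrightarrow> g x = 0" for g c d
  proof -
    define a where "a = (LBINT t. g t)"
    define g' where "g' t = g t - a * h0 t" for t
    have gi: "integrable lborel g" by (rule cont_supp_integrable(1)[OF g(1,4)])
    have g'c: "continuous_on UNIV g'" unfolding g'_def using g(1) h0c by (intro continuous_intros) auto
    have g's: "g' x = 0" if "x \<notin> {min c 1..max d 2}" for x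
    proof -
      have "x \<notin> {c..d}" "x \<notin> {1..2}" using that by auto
      then show ?thesis unfolding g'_def using g(4) h0s by simp
    qed
    have g'i: "(LBINT t. g' t) = 0"
      unfolding g'_def using gi h0i h0int by (simp add: a_def)
    have "(LBINT t. w t * complex_of_real (g' t)) = 0"
      by (rule R2[OF g'c _ _ g's g'i]) (use g(2,3) in auto)
    moreover have iwg: "integrable lborel (\<lambda>t. w t * complex_of_real (g t))"
      by (rule int_mult_supp(1)[OF wm wloc[of c d] g(1,4)]) (use g in auto)
    moreover have iwh: "integrable lborel (\<lambda>t. w t * complex_of_real (h0 t))"
      by (rule int_mult_supp(1)[OF wm wloc[of 1 2] h0c h0s]) simp_all
    moreover have "(LBINT t. w t * complex_of_real (g' t)) =
        (LBINT t. w t * complex_of_real (g t)) - complex_of_real a * C"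
    proof -
      have "(LBINT t. w t * complex_of_real (g' t)) =
          (LBINT t. w t * complex_of_real (g t) - complex_of_real a * (w t * complex_of_real (h0 t)))"
        unfolding g'_def by (intro Bochner_Integration.integral_cong) (auto simp: algebra_simps)
      also have "\<dots> = (LBINT t. w t * complex_of_real (g t)) - complex_of_real a * C"
        using iwg iwh unfolding C_def by simp
      finally show ?thesis .
    qed
    ultimately have wg: "(LBINT t. w t * complex_of_real (g t)) = complex_of_real a * C" by simp
    have igc: "integrable lborel (\<lambda>t. C * complex_of_real (g t))"
      using gi by (intro integrable_mult_right) (rule integrable_of_real)
    have "(LBINT t. (w t - C) * complex_of_real (g t)) =
        (LBINT t. w t * complex_of_real (g t) - C * complex_of_real (g t))"
      by (intro Bochner_Integration.integral_cong) (auto simp: algebra_simps)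
    also have "\<dots> = (LBINT t. w t * complex_of_real (g t)) - C * complex_of_real a"
      using iwg igc unfolding a_def by simp
    finally show ?thesis using wg by simp
  qed
  have "AE t in lborel. 0 < t \<longrightarrow> w t - C = 0"
  proof (rule fund_lemma)
    show "(\<lambda>t. w t - C) \<in> borel_measurable borel" by measurable
    show "set_integrable lborel {c..d} (\<lambda>t. w t - C)" if "0 < c" for c d
    proof -
      have "set_integrable lborel {c..d} (\<lambda>t. C)"
        unfolding set_integrable_def
        by (intro integrable_scaleR_left integrable_real_indicator) (auto simp: emeasure_lborel_Icc_eq)
      then show ?thesis using wloc[of c d] that by (intro set_integral_diff(1)) auto
    qed
    show "(LBINT t. (w t - C) * complex_of_real (g t)) = 0"
      if "continuous_on UNIV g" "0 < c" "c \<le> d" "\<And>x. x \<notin> {c..d} \<Longrightarrow> g x = 0" for g c d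
      by (rule R3[OF that])
  qed
  then have "AE t in lborel. 0 < t \<longrightarrow> u t = C + U t"
    by eventually_elim (auto simp: w_def)
  then show ?thesis unfolding U_def by blast
qed

lemma amgm_opt:
  fixes x A L :: real
  assumes "0 \<le> x" "0 \<le> A" "0 \<le> L" and H: "\<And>l. 0 < l \<Longrightarrow> x \<le> (l * A + L / l) / 2"
  shows "x\<^sup>2 \<le> L * A"
proof (cases "x = 0")
  case True
  then show ?thesis using assms by simp
next
  case False
  then have x: "x > 0" using assms(1) by simp
  show ?thesis
  proof (cases "A = 0")
    case True
    have "x \<le> (L / ((L + 1) / x)) / 2" using H[of "(L + 1) / x"] x assms True by simp
    also have "\<dots> = x * L / (2 * (L + 1))" using x assms by (simp add: field_simps)
    also have "\<dots> < x"
    proof -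
      have "x * L < x * (2 * (L + 1))" using x assms by (intro mult_strict_left_mono) auto
      then show ?thesis using assms by (simp add: pos_divide_less_eq)
    qed
    finally show ?thesis by simp
  next
    case False
    then have A: "A > 0" using assms by simp
    have "x \<le> ((x / A) * A + L / (x / A)) / 2" using H[of "x / A"] x A by simp
    also have "\<dots> = (x + L * A / x) / 2" using x A by (simp add: field_simps)
    finally have "x \<le> L * A / x" by simp
    then have "x * x \<le> L * A" using x by (simp add: field_simps)
    then show ?thesis by (simp add: power2_eq_square)
  qed
qed

lemma cs_interval:
  fixes v :: "real \<Rightarrow> complex"
  assumes v[measurable]: "v \<in> borel_measurable borel" and v2: "integrable lborel (\<lambda>t. (cmod (v t))\<^sup>2)"
    and ts: "t \<le> s"
  shows "(cmod (LINT r:{t<..s}|lborel. v r))\<^sup>2 \<le> (s - t) * (LBINT r. (cmod (v r))\<^sup>2)"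
proof -
  have vi: "set_integrable lborel {t<..s} v"
    by (rule set_integrable_subset[OF L2_locint[OF v v2, of t s]]) auto
  have vni: "set_integrable lborel {t<..s} (\<lambda>r. cmod (v r))" by (rule set_int_norm[OF vi])
  have v2i: "set_integrable lborel {t<..s} (\<lambda>r. (cmod (v r))\<^sup>2)"
    unfolding set_integrable_def using integrable_mult_indicator[OF _ v2, of "{t<..s}"] by simp
  have oi: "set_integrable lborel {t<..s} (\<lambda>r. 1::real)"
    unfolding set_integrable_def by (intro integrable_scaleR_left integrable_real_indicator) (auto simp: ts)
  define x where "x = (LINT r:{t<..s}|lborel. cmod (v r))"
  define D where "D = (LBINT r. (cmod (v r))\<^sup>2)"
  have n: "cmod (LINT r:{t<..s}|lborel. v r) \<le> x"
    unfolding x_def set_lebesgue_integral_def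
    by (rule order_trans[OF integral_norm_bound]) (auto simp: indicator_def)
  have x0: "0 \<le> x" unfolding x_def set_lebesgue_integral_def by (intro integral_nonneg_AE) (auto simp: indicator_def)
  have D0: "0 \<le> D" unfolding D_def by (intro integral_nonneg_AE) auto
  have m1: "(LINT r:{t<..s}|lborel. (cmod (v r))\<^sup>2) \<le> D"
    unfolding D_def set_lebesgue_integral_def by (intro integral_mono v2 v2i[unfolded set_integrable_def]) (auto simp: indicator_def)
  have m2: "(LINT r:{t<..s}|lborel. (1::real)) = s - t"
    using ts by (simp add: set_integral_const)
  have "x \<le> (l * D + (s - t) / l) / 2" if l: "0 < l" for l
  proof -
    have "x \<le> (LINT r:{t<..s}|lborel. (l * (cmod (v r))\<^sup>2 + 1 / l) / 2)"
      unfolding x_def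
    proof (rule set_integral_mono[OF vni])
      show "set_integrable lborel {t<..s} (\<lambda>r. (l * (cmod (v r))\<^sup>2 + 1 / l) / 2)"
        using v2i oi by (intro set_integrable_divide set_integral_add(1)) auto
      fix r
      have "0 \<le> (sqrt l * cmod (v r) - 1 / sqrt l)\<^sup>2" by simp
      also have "\<dots> = l * (cmod (v r))\<^sup>2 + 1 / l - 2 * cmod (v r)"
        using l by (simp add: power2_diff field_simps power_mult_distrib)
      finally show "cmod (v r) \<le> (l * (cmod (v r))\<^sup>2 + 1 / l) / 2" by simp
    qed
    also have "\<dots> = (l * (LINT r:{t<..s}|lborel. (cmod (v r))\<^sup>2) + (1 / l) * (LINT r:{t<..s}|lborel. (1::real))) / 2"
      using v2i oi by (simp add: set_integral_add set_integral_divide_zero)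
    also have "\<dots> \<le> (l * D + (s - t) / l) / 2"
      using m1 m2 l by (simp add: mult_left_mono)
    finally show ?thesis .
  qed
  then have "x\<^sup>2 \<le> (s - t) * D" using amgm_opt[OF x0 D0] ts by simp
  moreover have "(cmod (LINT r:{t<..s}|lborel. v r))\<^sup>2 \<le> x\<^sup>2" using n by (simp add: power_mono)
  ultimately show ?thesis unfolding D_def by simp
qed

lemma U_diff:
  fixes v :: "real \<Rightarrow> complex"
  assumes v[measurable]: "v \<in> borel_measurable borel" and v2: "integrable lborel (\<lambda>t. (cmod (v t))\<^sup>2)"
    and "0 \<le> t" "t \<le> s"
  shows "(LINT r:{0..s}|lborel. v r) - (LINT r:{0..t}|lborel. v r) = (LINT r:{t<..s}|lborel. v r)"
proof -
  have "{0..s} = {0..t} \<union> {t<..s}" using assms by auto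
  moreover have "(LINT r:{0..t} \<union> {t<..s}|lborel. v r) = (LINT r:{0..t}|lborel. v r) + (LINT r:{t<..s}|lborel. v r)"
  proof (rule set_integral_Un)
    show "set_integrable lborel {0..t} v" by (rule L2_locint[OF v v2])
    show "set_integrable lborel {t<..s} v"
      by (rule set_integrable_subset[OF L2_locint[OF v v2, of t s]]) auto
  qed auto
  ultimately show ?thesis by simp
qed

lemma lower_good:
  fixes u v :: "real \<Rightarrow> complex"
  assumes u[measurable]: "u \<in> borel_measurable borel" and v[measurable]: "v \<in> borel_measurable borel"
    and u2: "integrable lborel (\<lambda>t. (cmod (u t))\<^sup>2)" and v2: "integrable lborel (\<lambda>t. (cmod (v t))\<^sup>2)"
    and tu2: "integrable lborel (\<lambda>t. t\<^sup>2 * (cmod (u t))\<^sup>2)"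
    and u0: "\<And>t. t \<le> 0 \<Longrightarrow> u t = 0"
    and wd: "\<And>\<phi>. test_on {0<..} \<phi> \<Longrightarrow> (LINT x:{0<..}|lborel. u x * complex_of_real (deriv \<phi> x))
              = - (LINT x:{0<..}|lborel. v x * complex_of_real (\<phi> x))"
  shows "(LBINT t. (cmod (u t))\<^sup>2) \<le> 12 * (LBINT t. (cmod (v t))\<^sup>2 + (t + \<eta>)\<^sup>2 * (cmod (u t))\<^sup>2)"
proof -
  obtain C where rep: "AE t in lborel. 0 < t \<longrightarrow> u t = C + (LINT s:{0..t}|lborel. v s)"
    using representative[OF u v u2 v2 wd] by blast
  define U where "U t = (LINT s:{0..t}|lborel. v s)" for t
  define D where "D = (LBINT r. (cmod (v r))\<^sup>2)"
  have pi: "integrable lborel (\<lambda>t. (t + \<eta>)\<^sup>2 * (cmod (u t))\<^sup>2)"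
  proof (rule Bochner_Integration.integrable_bound)
    show "integrable lborel (\<lambda>t. 2 * (t\<^sup>2 * (cmod (u t))\<^sup>2) + 2 * \<eta>\<^sup>2 * (cmod (u t))\<^sup>2)"
      using tu2 u2 by auto
    show "AE t in lborel. norm ((t + \<eta>)\<^sup>2 * (cmod (u t))\<^sup>2) \<le> norm (2 * (t\<^sup>2 * (cmod (u t))\<^sup>2) + 2 * \<eta>\<^sup>2 * (cmod (u t))\<^sup>2)"
    proof (intro AE_I2)
      fix t
      have "0 \<le> (t - \<eta>)\<^sup>2" by simp
      then have "(t + \<eta>)\<^sup>2 \<le> 2 * t\<^sup>2 + 2 * \<eta>\<^sup>2" by (simp add: power2_diff power2_sum)
      then have "(t + \<eta>)\<^sup>2 * (cmod (u t))\<^sup>2 \<le> (2 * t\<^sup>2 + 2 * \<eta>\<^sup>2) * (cmod (u t))\<^sup>2"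
        by (intro mult_right_mono) auto
      then show "norm ((t + \<eta>)\<^sup>2 * (cmod (u t))\<^sup>2) \<le> norm (2 * (t\<^sup>2 * (cmod (u t))\<^sup>2) + 2 * \<eta>\<^sup>2 * (cmod (u t))\<^sup>2)"
        by (simp add: algebra_simps)
    qed
  qed measurable
  define P where "P = (LBINT t. (t + \<eta>)\<^sup>2 * (cmod (u t))\<^sup>2)"
  have D0: "0 \<le> D" unfolding D_def by (intro integral_nonneg_AE) auto
  have P0: "0 \<le> P" unfolding P_def by (intro integral_nonneg_AE) auto
  define m where "m = max 0 (- \<eta>)"
  have keyt: "(cmod (C + U t))\<^sup>2 \<le> 2 * P + 6 * D" if t: "0 < t" "m - 1 \<le> t" "t \<le> m + 1" for t
  proof -
    have AEs: "AE s in lborel. s \<in> {m+1..m+2} \<longrightarrow> (cmod (C + U t))\<^sup>2 \<le> 2 * ((s + \<eta>)\<^sup>2 * (cmod (u s))\<^sup>2) + 6 * D"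
      using rep
    proof eventually_elim
      case (elim s)
      show ?case
      proof
        assume s: "s \<in> {m+1..m+2}"
        then have "0 < s" unfolding m_def by auto
        then have us: "u s = C + U s" using elim unfolding U_def by simp
        have ts: "t \<le> s" using s t by auto
        have "U s - U t = (LINT r:{t<..s}|lborel. v r)"
          unfolding U_def by (rule U_diff[OF v v2]) (use t ts in auto)
        then have d: "(cmod (U s - U t))\<^sup>2 \<le> (s - t) * D"
          using cs_interval[OF v v2 ts] unfolding D_def by simp
        have "(s - t) * D \<le> 3 * D" using s t D0 by (intro mult_right_mono) auto
        with d have d3: "(cmod (U s - U t))\<^sup>2 \<le> 3 * D" by simp
        have "cmod (C + U t) \<le> cmod (C + U s) + cmod (U s - U t)"
          using norm_triangle_ineq4[of "C + U s" "U s - U t"] by (simp add: algebra_simps)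
        then have "(cmod (C + U t))\<^sup>2 \<le> (cmod (C + U s) + cmod (U s - U t))\<^sup>2"
          by (intro power_mono) auto
        also have "\<dots> \<le> 2 * (cmod (C + U s))\<^sup>2 + 2 * (cmod (U s - U t))\<^sup>2"
        proof -
          have "0 \<le> (cmod (C + U s) - cmod (U s - U t))\<^sup>2" by simp
          then show ?thesis by (simp add: power2_diff power2_sum)
        qed
        also have "(cmod (C + U s))\<^sup>2 \<le> (s + \<eta>)\<^sup>2 * (cmod (u s))\<^sup>2"
        proof -
          have "1 \<le> s + \<eta>" using s unfolding m_def by auto
          then have "1 \<le> (s + \<eta>)\<^sup>2" by (rule one_le_power)
          then show ?thesis unfolding us[symmetric] by (simp add: mult_le_cancel_right1)
        qed
        finally show "(cmod (C + U t))\<^sup>2 \<le> 2 * ((s + \<eta>)\<^sup>2 * (cmod (u s))\<^sup>2) + 6 * D"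
          using d3 by linarith
      qed
    qed
    have Bm: "{m+1..m+2} \<in> sets lborel" by simp
    have ci: "set_integrable lborel {m+1..m+2} (\<lambda>s. c::real)" for c
      unfolding set_integrable_def by (intro integrable_scaleR_left integrable_real_indicator) (auto simp: emeasure_lborel_Icc_eq)
    have pBi: "set_integrable lborel {m+1..m+2} (\<lambda>s. (s + \<eta>)\<^sup>2 * (cmod (u s))\<^sup>2)"
      unfolding set_integrable_def using integrable_mult_indicator[OF _ pi, of "{m+1..m+2}"] by simp
    have "(LINT s:{m+1..m+2}|lborel. (cmod (C + U t))\<^sup>2) \<le>
        (LINT s:{m+1..m+2}|lborel. 2 * ((s + \<eta>)\<^sup>2 * (cmod (u s))\<^sup>2) + 6 * D)"
      by (rule set_integral_mono_AE[OF ci]) (use pBi ci AEs in auto)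
    also have "\<dots> = 2 * (LINT s:{m+1..m+2}|lborel. (s + \<eta>)\<^sup>2 * (cmod (u s))\<^sup>2) + 6 * D"
      using pBi ci by (simp add: set_integral_add set_integral_const)
    also have "(LINT s:{m+1..m+2}|lborel. (s + \<eta>)\<^sup>2 * (cmod (u s))\<^sup>2) \<le> P"
      unfolding P_def set_lebesgue_integral_def
      by (intro integral_mono pi pBi[unfolded set_integrable_def]) (auto simp: indicator_def)
    finally show ?thesis by (simp add: set_integral_const)
  qed
  have AEt: "AE t in lborel. (cmod (u t))\<^sup>2 \<le> indicator {m-1..m+1} t * (2 * P + 6 * D) + (t + \<eta>)\<^sup>2 * (cmod (u t))\<^sup>2"
    using rep
  proof eventually_elim
    case (elim t)
    show ?case
    proof (cases "t \<le> 0")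
      case True
      then show ?thesis using u0 P0 D0 by (simp add: indicator_def)
    next
      case False
      show ?thesis
      proof (cases "t \<in> {m-1..m+1}")
        case True
        then have "(cmod (u t))\<^sup>2 \<le> 2 * P + 6 * D" using keyt[of t] False elim unfolding U_def by auto
        moreover have "0 \<le> (t + \<eta>)\<^sup>2 * (cmod (u t))\<^sup>2" by simp
        ultimately have A: "(cmod (u t))\<^sup>2 \<le> (2 * P + 6 * D) + (t + \<eta>)\<^sup>2 * (cmod (u t))\<^sup>2"
          by (rule add_increasing2[rotated])
        have "indicator {m-1..m+1} t = (1::real)" using True by simp
        then show ?thesis using A by simp
      next
        case notin: False
        have "1 \<le> \<bar>t + \<eta>\<bar>" using notin False unfolding m_def by (auto split: if_splits)
        then have "1 \<le> \<bar>t + \<eta>\<bar>\<^sup>2" by (rule one_le_power)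
        then have "1 \<le> (t + \<eta>)\<^sup>2" by simp
        then have "(cmod (u t))\<^sup>2 \<le> (t + \<eta>)\<^sup>2 * (cmod (u t))\<^sup>2" by (simp add: mult_le_cancel_right1)
        moreover have "indicator {m-1..m+1} t = (0::real)" using notin by simp
        ultimately show ?thesis by simp
      qed
    qed
  qed
  have ii: "integrable lborel (\<lambda>t. indicator {m-1..m+1} t * (2 * P + 6 * D))"
    by (rule integrable_mult_left) (rule integrable_real_indicator, auto)
  have "(LBINT t. (cmod (u t))\<^sup>2) \<le> (LBINT t. indicator {m-1..m+1} t * (2 * P + 6 * D) + (t + \<eta>)\<^sup>2 * (cmod (u t))\<^sup>2)"
    by (rule integral_mono_AE[OF u2 _ AEt]) (use ii pi in auto)
  also have "\<dots> = 2 * (2 * P + 6 * D) + P"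
    using ii pi unfolding P_def by (simp add: measure_lborel_Icc)
  finally have N: "(LBINT t. (cmod (u t))\<^sup>2) \<le> 5 * P + 12 * D" by simp
  have "(LBINT t. (cmod (v t))\<^sup>2 + (t + \<eta>)\<^sup>2 * (cmod (u t))\<^sup>2) = D + P"
    unfolding D_def P_def using v2 pi by simp
  then show ?thesis using N P0 by simp
qed

lemma U_meas:
  fixes v :: "real \<Rightarrow> complex"
  assumes v[measurable]: "v \<in> borel_measurable borel"
  shows "(\<lambda>x. LINT s:{0..x}|lborel. v s) \<in> borel_measurable borel"
proof -
  have "(\<lambda>x. LBINT s. (if 0 \<le> s \<and> s \<le> x then v s else 0)) \<in> borel_measurable lborel"
    by (rule lborel.borel_measurable_lebesgue_integral) measurable
  moreover have "(\<lambda>x. LINT s:{0..x}|lborel. v s) = (\<lambda>x. LBINT s. (if 0 \<le> s \<and> s \<le> x then v s else 0))"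
    unfolding set_lebesgue_integral_def
    by (intro ext Bochner_Integration.integral_cong) (auto simp: indicator_def)
  ultimately show ?thesis by simp
qed

lemma U_cont:
  fixes v :: "real \<Rightarrow> complex"
  assumes v[measurable]: "v \<in> borel_measurable borel" and v2: "integrable lborel (\<lambda>t. (cmod (v t))\<^sup>2)"
  shows "continuous_on {0..d} (\<lambda>x. LINT s:{0..x}|lborel. v s)"
proof -
  have vloc: "set_integrable lborel {c..d} v" for c d by (rule L2_locint[OF v v2])
  have "continuous_on {0..d} (\<lambda>x. integral {0..x} v)"
    by (rule indefinite_integral_continuous_1) (rule set_borel_integral_eq_integral(1)[OF vloc])
  moreover have "(LINT s:{0..x}|lborel. v s) = integral {0..x} v" for x
    using set_borel_integral_eq_integral(2)[OF vloc] by simp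
  ultimately show ?thesis by simp
qed

lemma ewd:
  fixes u v :: "real \<Rightarrow> complex" and \<psi> \<psi>' :: "real \<Rightarrow> real"
  assumes u[measurable]: "u \<in> borel_measurable borel" and v[measurable]: "v \<in> borel_measurable borel"
    and u2: "integrable lborel (\<lambda>t. (cmod (u t))\<^sup>2)" and v2: "integrable lborel (\<lambda>t. (cmod (v t))\<^sup>2)"
    and u0: "\<And>t. t \<le> 0 \<Longrightarrow> u t = 0" and v0: "\<And>t. t \<le> 0 \<Longrightarrow> v t = 0"
    and wd: "\<And>\<phi>. test_on {0<..} \<phi> \<Longrightarrow> (LINT x:{0<..}|lborel. u x * complex_of_real (deriv \<phi> x))
              = - (LINT x:{0<..}|lborel. v x * complex_of_real (\<phi> x))"
    and D: "\<And>x. (\<psi> has_real_derivative \<psi>' x) (at x)" and cont: "continuous_on UNIV \<psi>'"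
    and p0: "\<psi> 0 = 0" and R: "0 \<le> R" "\<And>x. x > R \<Longrightarrow> \<psi> x = 0" "\<And>x. x > R \<Longrightarrow> \<psi>' x = 0"
  shows "(LBINT x. u x * complex_of_real (\<psi>' x)) = - (LBINT x. v x * complex_of_real (\<psi> x))"
proof -
  obtain C where rep: "AE t in lborel. 0 < t \<longrightarrow> u t = C + (LINT s:{0..t}|lborel. v s)"
    using representative[OF u v u2 v2 wd] by blast
  define U where "U x = (LINT s:{0..x}|lborel. v s)" for x
  have Um[measurable]: "U \<in> borel_measurable borel" unfolding U_def by (rule U_meas[OF v])
  have [measurable]: "\<psi>' \<in> borel_measurable borel" using cont by (rule borel_measurable_continuous_onI)
  have contp: "continuous_on UNIV \<psi>" using D by (meson DERIV_isCont continuous_at_imp_continuous_on)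
  have [measurable]: "\<psi> \<in> borel_measurable borel" using contp by (rule borel_measurable_continuous_onI)
  define S where "S = R + 1"
  have S: "0 \<le> S" "\<psi> S = 0" using R unfolding S_def by auto
  have vloc: "set_integrable lborel {c..d} v" for c d by (rule L2_locint[OF v v2])
  have e1: "(LBINT x. u x * complex_of_real (\<psi>' x)) = (LINT x:{0..S}|lborel. u x * complex_of_real (\<psi>' x))"
    unfolding set_lebesgue_integral_def
    by (intro Bochner_Integration.integral_cong) (auto simp: indicator_def u0 R(3) S_def)
  also have "\<dots> = (LINT x:{0..S}|lborel. (C + U x) * complex_of_real (\<psi>' x))"
  proof (rule set_lebesgue_integral_cong_AE)
    show "AE x\<in>{0..S} in lborel. u x * complex_of_real (\<psi>' x) = (C + U x) * complex_of_real (\<psi>' x)"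
      using rep AE_lborel_singleton[of 0] by eventually_elim (auto simp: U_def)
  qed auto
  also have "\<dots> = C * (LINT x:{0..S}|lborel. complex_of_real (\<psi>' x)) +
      (LINT x:{0..S}|lborel. complex_of_real (\<psi>' x) * U x)"
  proof -
    have cs: "continuous_on {0..S} \<psi>'" using cont continuous_on_subset by blast
    have cU: "continuous_on {0..S} U" unfolding U_def by (rule U_cont[OF v v2])
    have i1: "set_integrable lborel {0..S} (\<lambda>x. C * complex_of_real (\<psi>' x))"
      by (rule borel_integrable_atLeastAtMost') (intro continuous_intros cs)
    have i2: "set_integrable lborel {0..S} (\<lambda>x. complex_of_real (\<psi>' x) * U x)"
      by (rule borel_integrable_atLeastAtMost') (intro continuous_intros cs cU)
    have "(LINT x:{0..S}|lborel. (C + U x) * complex_of_real (\<psi>' x)) =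
        (LINT x:{0..S}|lborel. C * complex_of_real (\<psi>' x) + complex_of_real (\<psi>' x) * U x)"
      by (simp add: algebra_simps)
    also have "\<dots> = (LINT x:{0..S}|lborel. C * complex_of_real (\<psi>' x)) + (LINT x:{0..S}|lborel. complex_of_real (\<psi>' x) * U x)"
      by (rule set_integral_add(2)[OF i1 i2])
    finally show ?thesis by simp
  qed
  also have "(LINT x:{0..S}|lborel. complex_of_real (\<psi>' x)) = 0"
  proof -
    have "(LBINT x. \<psi>' x * indicator {0..S} x) = \<psi> S - \<psi> 0"
      by (rule integral_FTC_Icc_real) (use S D cont in \<open>auto simp: continuous_on_eq_continuous_at\<close>)
    then have "(LINT x:{0..S}|lborel. \<psi>' x) = 0" using S p0 by (simp add: set_lebesgue_integral_def mult.commute)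
    then show ?thesis by (simp add: set_integral_complex_of_real)
  qed
  also have "(LINT x:{0..S}|lborel. complex_of_real (\<psi>' x) * U x) =
      complex_of_real (\<psi> S) * (LINT s:{0..S}|lborel. v s) - (LINT s:{0..S}|lborel. v s * complex_of_real (\<psi> s))"
    unfolding U_def by (rule fubini_ibp[OF v vloc S(1) D cont])
  also have "(LINT s:{0..S}|lborel. v s * complex_of_real (\<psi> s)) = (LBINT x. v x * complex_of_real (\<psi> x))"
    unfolding set_lebesgue_integral_def
    by (intro Bochner_Integration.integral_cong) (auto simp: indicator_def v0 R(2) S_def)
  finally show ?thesis using S by simp
qed

definition Nn :: "(real \<Rightarrow> complex) \<Rightarrow> real" where
  "Nn u = (LINT t:{0<..}|lborel. (cmod (u t))\<^sup>2)"
definition Qn :: "real \<Rightarrow> (real \<Rightarrow> complex) \<Rightarrow> (real \<Rightarrow> complex) \<Rightarrow> real" where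
  "Qn \<eta> u v = (LINT t:{0<..}|lborel. (cmod (v t))\<^sup>2 + (t + \<eta>)\<^sup>2 * (cmod (u t))\<^sup>2)"

definition restr :: "(real \<Rightarrow> complex) \<Rightarrow> real \<Rightarrow> complex" where
  "restr u t = indicator {0<..} t *\<^sub>R u t"

lemma good_conv:
  assumes "B1_pair {0<..} u v"
  shows "restr u \<in> borel_measurable borel" "restr v \<in> borel_measurable borel"
    "integrable lborel (\<lambda>t. (cmod (restr u t))\<^sup>2)" "integrable lborel (\<lambda>t. (cmod (restr v t))\<^sup>2)"
    "integrable lborel (\<lambda>t. t\<^sup>2 * (cmod (restr u t))\<^sup>2)"
    "\<And>t. t \<le> 0 \<Longrightarrow> restr u t = 0" "\<And>t. t \<le> 0 \<Longrightarrow> restr v t = 0"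
    "\<And>\<phi>. test_on {0<..} \<phi> \<Longrightarrow> (LINT x:{0<..}|lborel. restr u x * complex_of_real (deriv \<phi> x))
              = - (LINT x:{0<..}|lborel. restr v x * complex_of_real (\<phi> x))"
    "Nn u = (LBINT t. (cmod (restr u t))\<^sup>2)"
    "Qn \<eta> u v = (LBINT t. (cmod (restr v t))\<^sup>2 + (t + \<eta>)\<^sup>2 * (cmod (restr u t))\<^sup>2)"
proof -
  have Lu: "L2_on {0<..} u" and Lv: "L2_on {0<..} v" and W: "weak_deriv_on {0<..} u v"
    and Lt: "L2_on {0<..} (\<lambda>t. complex_of_real t * u t)"
    using assms unfolding B1_pair_def by auto
  show "restr u \<in> borel_measurable borel"
    using Lu unfolding L2_on_def set_borel_measurable_def restr_def by simp
  show "restr v \<in> borel_measurable borel"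
    using Lv unfolding L2_on_def set_borel_measurable_def restr_def by simp
  have eq: "(\<lambda>t. (cmod (restr w t))\<^sup>2) = (\<lambda>t. indicator {0<..} t *\<^sub>R (cmod (w t))\<^sup>2)" for w
    by (auto simp: restr_def indicator_def fun_eq_iff)
  show "integrable lborel (\<lambda>t. (cmod (restr u t))\<^sup>2)"
    using Lu unfolding L2_on_def set_integrable_def eq by simp
  show "integrable lborel (\<lambda>t. (cmod (restr v t))\<^sup>2)"
    using Lv unfolding L2_on_def set_integrable_def eq by simp
  have eqt: "(\<lambda>t. t\<^sup>2 * (cmod (restr u t))\<^sup>2) = (\<lambda>t. indicator {0<..} t *\<^sub>R (cmod (complex_of_real t * u t))\<^sup>2)"
    by (auto simp: restr_def indicator_def fun_eq_iff norm_mult power_mult_distrib)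
  show "integrable lborel (\<lambda>t. t\<^sup>2 * (cmod (restr u t))\<^sup>2)"
    using Lt unfolding L2_on_def set_integrable_def eqt by simp
  show "restr u t = 0" if "t \<le> 0" for t using that by (simp add: restr_def)
  show "restr v t = 0" if "t \<le> 0" for t using that by (simp add: restr_def)
  show "(LINT x:{0<..}|lborel. restr u x * complex_of_real (deriv \<phi> x))
              = - (LINT x:{0<..}|lborel. restr v x * complex_of_real (\<phi> x))" if "test_on {0<..} \<phi>" for \<phi>
  proof -
    have "(LINT x:{0<..}|lborel. restr u x * complex_of_real (deriv \<phi> x)) = (LINT x:{0<..}|lborel. u x * complex_of_real (deriv \<phi> x))"
      by (rule set_lebesgue_integral_cong) (auto simp: restr_def)
    moreover have "(LINT x:{0<..}|lborel. restr v x * complex_of_real (\<phi> x)) = (LINT x:{0<..}|lborel. v x * complex_of_real (\<phi> x))"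
      by (rule set_lebesgue_integral_cong) (auto simp: restr_def)
    ultimately show ?thesis using W that unfolding weak_deriv_on_def by simp
  qed
  show "Nn u = (LBINT t. (cmod (restr u t))\<^sup>2)"
    unfolding Nn_def set_lebesgue_integral_def eq ..
  show "Qn \<eta> u v = (LBINT t. (cmod (restr v t))\<^sup>2 + (t + \<eta>)\<^sup>2 * (cmod (restr u t))\<^sup>2)"
    unfolding Qn_def set_lebesgue_integral_def
    by (intro Bochner_Integration.integral_cong) (auto simp: restr_def indicator_def)
qed

lemma neumann_lower:
  assumes "B1_pair {0<..} u v"
  shows "Nn u \<le> 12 * Qn \<eta> u v"
  unfolding good_conv(9,10)[OF assms]
  by (rule lower_good) (use good_conv[OF assms] in auto)

lemma aff_int:
  fixes F :: "real \<Rightarrow> 'a::{banach, second_countable_topology}" and c :: real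
  assumes "c \<noteq> 0" "integrable lborel F"
  shows "integrable lborel (\<lambda>x. F (c * x))" "(LBINT x. F (c * x)) = (1 / \<bar>c\<bar>) *\<^sub>R (LBINT x. F x)"
proof -
  show "integrable lborel (\<lambda>x. F (c * x))"
    using lborel_integrable_real_affine[OF assms(2) assms(1), of 0] by simp
  have "(LBINT x. F x) = \<bar>c\<bar> *\<^sub>R (LBINT x. F (0 + c * x))"
    by (rule lborel_integral_real_affine[OF assms(1)])
  then show "(LBINT x. F (c * x)) = (1 / \<bar>c\<bar>) *\<^sub>R (LBINT x. F x)"
    using assms(1) by simp
qed

lemma sigma_pos: "t > 0 \<Longrightarrow> sigma a t = 1" and sigma_neg: "t \<le> 0 \<Longrightarrow> sigma a t = a"
  unfolding sigma_def by auto

lemma glue_good: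
  fixes p q :: "real \<Rightarrow> complex" and b r \<eta> :: real
  assumes p[measurable]: "p \<in> borel_measurable borel" and q[measurable]: "q \<in> borel_measurable borel"
    and p2: "integrable lborel (\<lambda>t. (cmod (p t))\<^sup>2)" and q2: "integrable lborel (\<lambda>t. (cmod (q t))\<^sup>2)"
    and tp2: "integrable lborel (\<lambda>t. t\<^sup>2 * (cmod (p t))\<^sup>2)"
    and p0: "\<And>t. t \<le> 0 \<Longrightarrow> p t = 0" and q0: "\<And>t. t \<le> 0 \<Longrightarrow> q t = 0"
    and r: "0 < r"
  defines "f \<equiv> (\<lambda>t. p ((1/r) * t) + p ((-(r^3)) * t))"
    and "g \<equiv> (\<lambda>t. complex_of_real (1/r) * q ((1/r) * t) - complex_of_real (r^3) * q ((-(r^3)) * t))"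
  shows "L2_on UNIV f" "L2_on UNIV g" "L2_on UNIV (\<lambda>t. complex_of_real t * f t)"
    "(LBINT t. (cmod (f t))\<^sup>2) = (r + 1/r^3) * (LBINT t. (cmod (p t))\<^sup>2)"
    "(LBINT t. (cmod (g t))\<^sup>2 + (\<eta> * r + sigma (-(r^4)) t * t)\<^sup>2 * (cmod (f t))\<^sup>2)
       = (1/r + r^3) * (LBINT t. (cmod (q t))\<^sup>2 + (t + \<eta>)\<^sup>2 * (cmod (p t))\<^sup>2)"
proof -
  define c1 where "c1 = 1/r"
  define c2 where "c2 = -(r^3)"
  have c1: "c1 \<noteq> 0" "\<bar>c1\<bar> = 1/r" "c1 > 0" using r unfolding c1_def by auto
  have c2: "c2 \<noteq> 0" "\<bar>c2\<bar> = r^3" "c2 < 0" using r unfolding c2_def by auto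
  have fdef: "f = (\<lambda>t. p (c1 * t) + p (c2 * t))" unfolding f_def c1_def c2_def ..
  have gdef: "g = (\<lambda>t. complex_of_real c1 * q (c1 * t) - complex_of_real (r^3) * q (c2 * t))"
    unfolding g_def c1_def c2_def ..
  have [measurable]: "f \<in> borel_measurable borel" unfolding fdef by measurable
  have [measurable]: "g \<in> borel_measurable borel" unfolding gdef by measurable
  have sgn: "(0 < t \<longrightarrow> c1 * t > 0 \<and> c2 * t < 0) \<and> (t < 0 \<longrightarrow> c1 * t < 0 \<and> c2 * t > 0)" for t
    using mult_pos_pos[OF c1(3), of t] mult_neg_pos[OF c2(3), of t] mult_pos_neg[OF c1(3), of t]
      mult_neg_neg[OF c2(3), of t] by blast
  have P1: "(cmod (f t))\<^sup>2 = (cmod (p (c1 * t)))\<^sup>2 + (cmod (p (c2 * t)))\<^sup>2" for t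
  proof (cases "t > 0")
    case True then show ?thesis using sgn[of t] p0[of "c2 * t"] unfolding fdef by simp
  next
    case False
    then consider "t < 0" | "t = 0" by linarith
    then show ?thesis
    proof cases
      case 1 then show ?thesis using sgn[of t] p0[of "c1 * t"] unfolding fdef by simp
    qed (simp add: fdef p0)
  qed
  have P2: "(cmod (g t))\<^sup>2 = c1\<^sup>2 * (cmod (q (c1 * t)))\<^sup>2 + r^6 * (cmod (q (c2 * t)))\<^sup>2" for t
  proof (cases "t > 0")
    case True then show ?thesis using sgn[of t] q0[of "c2 * t"] unfolding gdef by (simp add: norm_mult power_mult_distrib)
  next
    case False
    then consider "t < 0" | "t = 0" by linarith
    then show ?thesis
    proof cases
      case 1
      have "cmod (complex_of_real r ^ 3) = r^3" using r by (simp add: norm_power)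
      then have r6: "(cmod (complex_of_real r ^ 3))\<^sup>2 = r^6" by (simp flip: power_mult)
      show ?thesis using 1 sgn[of t] q0[of "c1 * t"] r r6 unfolding gdef
        by (simp add: norm_mult power_mult_distrib)
    qed (simp add: gdef q0)
  qed
  define G1 where "G1 y = c1\<^sup>2 * (cmod (q y))\<^sup>2 + r\<^sup>2 * ((y + \<eta>)\<^sup>2 * (cmod (p y))\<^sup>2)" for y
  define G2 where "G2 y = r^6 * (cmod (q y))\<^sup>2 + r\<^sup>2 * ((y + \<eta>)\<^sup>2 * (cmod (p y))\<^sup>2)" for y
  have P3: "(cmod (g t))\<^sup>2 + (\<eta> * r + sigma (-(r^4)) t * t)\<^sup>2 * (cmod (f t))\<^sup>2 = G1 (c1 * t) + G2 (c2 * t)" for t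
  proof (cases "t > 0")
    case True
    have "(\<eta> * r + t)\<^sup>2 = r\<^sup>2 * (c1 * t + \<eta>)\<^sup>2" using r unfolding c1_def by (simp add: field_simps power2_eq_square)
    then show ?thesis using True sgn[of t] p0[of "c2 * t"] q0[of "c2 * t"] unfolding P1 P2 G1_def G2_def
      by (simp add: sigma_pos)
  next
    case False
    then consider "t < 0" | "t = 0" by linarith
    then show ?thesis
    proof cases
      case 1
      have "(\<eta> * r + - (r^4) * t)\<^sup>2 = r\<^sup>2 * (c2 * t + \<eta>)\<^sup>2" unfolding c2_def by (simp add: power2_eq_square eval_nat_numeral algebra_simps)
      then show ?thesis using 1 sgn[of t] p0[of "c1 * t"] q0[of "c1 * t"] unfolding P1 P2 G1_def G2_def
        by (simp add: sigma_neg)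
    next
      case 2
      then show ?thesis unfolding P1 P2 G1_def G2_def by (simp add: p0 q0)
    qed
  qed
  have P4: "(cmod (complex_of_real t * f t))\<^sup>2 = r\<^sup>2 * ((c1 * t)\<^sup>2 * (cmod (p (c1 * t)))\<^sup>2)
      + (1 / r^6) * ((c2 * t)\<^sup>2 * (cmod (p (c2 * t)))\<^sup>2)" for t
  proof -
    have "(cmod (complex_of_real t * f t))\<^sup>2 = t\<^sup>2 * (cmod (f t))\<^sup>2" by (simp add: norm_mult power_mult_distrib)
    also have "\<dots> = t\<^sup>2 * (cmod (p (c1 * t)))\<^sup>2 + t\<^sup>2 * (cmod (p (c2 * t)))\<^sup>2" unfolding P1 by (simp add: algebra_simps)
    also have "t\<^sup>2 * (cmod (p (c1 * t)))\<^sup>2 = r\<^sup>2 * ((c1 * t)\<^sup>2 * (cmod (p (c1 * t)))\<^sup>2)"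
      using r unfolding c1_def by (simp add: field_simps power2_eq_square)
    also have "t\<^sup>2 * (cmod (p (c2 * t)))\<^sup>2 = (1 / r^6) * ((c2 * t)\<^sup>2 * (cmod (p (c2 * t)))\<^sup>2)"
      using r unfolding c2_def by (simp add: field_simps power2_eq_square eval_nat_numeral)
    finally show ?thesis .
  qed
  have pP: "integrable lborel (\<lambda>y. (y + \<eta>)\<^sup>2 * (cmod (p y))\<^sup>2)"
  proof (rule Bochner_Integration.integrable_bound)
    show "integrable lborel (\<lambda>t. 2 * (t\<^sup>2 * (cmod (p t))\<^sup>2) + 2 * \<eta>\<^sup>2 * (cmod (p t))\<^sup>2)"
      using tp2 p2 by auto
    show "AE t in lborel. norm ((t + \<eta>)\<^sup>2 * (cmod (p t))\<^sup>2) \<le> norm (2 * (t\<^sup>2 * (cmod (p t))\<^sup>2) + 2 * \<eta>\<^sup>2 * (cmod (p t))\<^sup>2)"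
    proof (intro AE_I2)
      fix t
      have "0 \<le> (t - \<eta>)\<^sup>2" by simp
      then have "(t + \<eta>)\<^sup>2 \<le> 2 * t\<^sup>2 + 2 * \<eta>\<^sup>2" by (simp add: power2_diff power2_sum)
      then have "(t + \<eta>)\<^sup>2 * (cmod (p t))\<^sup>2 \<le> (2 * t\<^sup>2 + 2 * \<eta>\<^sup>2) * (cmod (p t))\<^sup>2"
        by (intro mult_right_mono) auto
      then show "norm ((t + \<eta>)\<^sup>2 * (cmod (p t))\<^sup>2) \<le> norm (2 * (t\<^sup>2 * (cmod (p t))\<^sup>2) + 2 * \<eta>\<^sup>2 * (cmod (p t))\<^sup>2)"
        by (simp add: algebra_simps)
    qed
  qed measurable
  have G1i: "integrable lborel G1" unfolding G1_def using q2 pP by auto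
  have G2i: "integrable lborel G2" unfolding G2_def using q2 pP by auto
  have intG1: "(LBINT y. G1 y) = c1\<^sup>2 * (LBINT t. (cmod (q t))\<^sup>2) + r\<^sup>2 * (LBINT y. (y + \<eta>)\<^sup>2 * (cmod (p y))\<^sup>2)"
    unfolding G1_def using q2 pP by simp
  have intG2: "(LBINT y. G2 y) = r^6 * (LBINT t. (cmod (q t))\<^sup>2) + r\<^sup>2 * (LBINT y. (y + \<eta>)\<^sup>2 * (cmod (p y))\<^sup>2)"
    unfolding G2_def using q2 pP by simp
  have Q: "(LBINT t. (cmod (q t))\<^sup>2 + (t + \<eta>)\<^sup>2 * (cmod (p t))\<^sup>2) =
      (LBINT t. (cmod (q t))\<^sup>2) + (LBINT y. (y + \<eta>)\<^sup>2 * (cmod (p y))\<^sup>2)"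
    using q2 pP by simp
  note A1 = aff_int[OF c1(1)] and A2 = aff_int[OF c2(1)]
  have fi: "integrable lborel (\<lambda>t. (cmod (f t))\<^sup>2)"
    unfolding P1 using A1(1)[OF p2] A2(1)[OF p2] by simp
  show "(LBINT t. (cmod (f t))\<^sup>2) = (r + 1/r^3) * (LBINT t. (cmod (p t))\<^sup>2)"
    unfolding P1 using A1[OF p2] A2[OF p2] c1 c2 by (simp add: algebra_simps)
  have gi: "integrable lborel (\<lambda>t. (cmod (g t))\<^sup>2)"
    unfolding P2 using A1(1)[OF q2] A2(1)[OF q2] by simp
  have tfi: "integrable lborel (\<lambda>t. (cmod (complex_of_real t * f t))\<^sup>2)"
    unfolding P4 using A1(1)[OF tp2] A2(1)[OF tp2] by simp
  show "(LBINT t. (cmod (g t))\<^sup>2 + (\<eta> * r + sigma (-(r^4)) t * t)\<^sup>2 * (cmod (f t))\<^sup>2)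
       = (1/r + r^3) * (LBINT t. (cmod (q t))\<^sup>2 + (t + \<eta>)\<^sup>2 * (cmod (p t))\<^sup>2)"
  proof -
    have "(LBINT t. (cmod (g t))\<^sup>2 + (\<eta> * r + sigma (-(r^4)) t * t)\<^sup>2 * (cmod (f t))\<^sup>2)
        = (LBINT t. G1 (c1 * t) + G2 (c2 * t))" unfolding P3 ..
    also have "\<dots> = (LBINT t. G1 (c1 * t)) + (LBINT t. G2 (c2 * t))"
      using A1(1)[OF G1i] A2(1)[OF G2i] by simp
    also have "\<dots> = r * (LBINT y. G1 y) + (1 / r^3) * (LBINT y. G2 y)"
      using A1(2)[OF G1i] A2(2)[OF G2i] c1 c2 by simp
    also have "\<dots> = (1/r + r^3) * ((LBINT t. (cmod (q t))\<^sup>2) + (LBINT y. (y + \<eta>)\<^sup>2 * (cmod (p y))\<^sup>2))"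
    proof -
      define DD where "DD = (LBINT t. (cmod (q t))\<^sup>2)"
      define PP where "PP = (LBINT y. (y + \<eta>)\<^sup>2 * (cmod (p y))\<^sup>2)"
      have "r * (c1\<^sup>2 * DD + r\<^sup>2 * PP) + (1 / r^3) * (r^6 * DD + r\<^sup>2 * PP) = (1/r + r^3) * (DD + PP)"
        unfolding c1_def using r by (simp add: field_simps power2_eq_square eval_nat_numeral)
      then show ?thesis unfolding intG1 intG2 DD_def PP_def .
    qed
    finally show ?thesis unfolding Q .
  qed
  show "L2_on UNIV f" unfolding L2_on_def set_borel_measurable_def set_integrable_def using fi by simp
  show "L2_on UNIV g" unfolding L2_on_def set_borel_measurable_def set_integrable_def using gi by simp
  show "L2_on UNIV (\<lambda>t. complex_of_real t * f t)"
    unfolding L2_on_def set_borel_measurable_def set_integrable_def using tfi by simp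
qed

lemma glue_wd:
  fixes p q :: "real \<Rightarrow> complex" and r :: real
  assumes p[measurable]: "p \<in> borel_measurable borel" and q[measurable]: "q \<in> borel_measurable borel"
    and p2: "integrable lborel (\<lambda>t. (cmod (p t))\<^sup>2)" and q2: "integrable lborel (\<lambda>t. (cmod (q t))\<^sup>2)"
    and p0: "\<And>t. t \<le> 0 \<Longrightarrow> p t = 0" and q0: "\<And>t. t \<le> 0 \<Longrightarrow> q t = 0"
    and wd: "\<And>\<phi>. test_on {0<..} \<phi> \<Longrightarrow> (LINT x:{0<..}|lborel. p x * complex_of_real (deriv \<phi> x))
              = - (LINT x:{0<..}|lborel. q x * complex_of_real (\<phi> x))"
    and r: "0 < r"
  defines "f \<equiv> (\<lambda>t. p ((1/r) * t) + p ((-(r^3)) * t))"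
    and "g \<equiv> (\<lambda>t. complex_of_real (1/r) * q ((1/r) * t) - complex_of_real (r^3) * q ((-(r^3)) * t))"
  shows "weak_deriv_on UNIV f g"
  unfolding weak_deriv_on_def
proof (intro allI impI)
  fix \<phi> assume \<phi>: "test_on UNIV \<phi>"
  define c1 where "c1 = 1/r"
  define c2 where "c2 = -(r^3)"
  have c1: "c1 \<noteq> 0" "\<bar>c1\<bar> = 1/r" using r unfolding c1_def by auto
  have c2: "c2 \<noteq> 0" "\<bar>c2\<bar> = r^3" using r unfolding c2_def by auto
  have fdef: "f = (\<lambda>t. p (c1 * t) + p (c2 * t))" unfolding f_def c1_def c2_def ..
  have gdef: "g = (\<lambda>t. complex_of_real c1 * q (c1 * t) - complex_of_real (r^3) * q (c2 * t))"
    unfolding g_def c1_def c2_def ..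
  obtain a0 b0 where ab: "a0 \<le> b0" "\<And>x. x \<notin> {a0..b0} \<Longrightarrow> \<phi> x = 0" "\<And>x. x \<notin> {a0..b0} \<Longrightarrow> deriv \<phi> x = 0"
    using test_support_UNIV[OF \<phi>] by blast
  note D = test_onD(1)[OF \<phi>] and contd = test_onD(2)[OF \<phi>] and contp = test_onD(3)[OF \<phi>]
  define M where "M = \<bar>a0\<bar> + \<bar>b0\<bar>"
  define R where "R = M / r + M * r^3"
  have M0: "0 \<le> M" unfolding M_def by simp
  have R0: "0 \<le> R" unfolding R_def using M0 r by simp
  have far: "r * y \<notin> {a0..b0} \<and> - (y / r^3) \<notin> {a0..b0}" if "y \<notin> {-R..R}" for y
  proof -
    have "\<bar>y\<bar> > R" using that by auto
    moreover have "M / r \<le> R" "M * r^3 \<le> R" unfolding R_def using M0 r by auto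
    ultimately have y1: "\<bar>y\<bar> > M / r" and y2: "\<bar>y\<bar> > M * r^3" by linarith+
    have "\<bar>r * y\<bar> > M" using y1 r by (simp add: abs_mult field_simps)
    moreover have "\<bar>- (y / r^3)\<bar> > M" using y2 r by (simp add: field_simps)
    ultimately show ?thesis unfolding M_def by auto
  qed
  define \<psi> where "\<psi> y = \<phi> (r * y) - \<phi> (- (y / r^3))" for y
  define \<psi>' where "\<psi>' y = r * deriv \<phi> (r * y) + deriv \<phi> (- (y / r^3)) / r^3" for y
  have Dpsi: "(\<psi> has_real_derivative \<psi>' x) (at x)" for x
  proof -
    have "((\<lambda>y. \<phi> (r * y)) has_real_derivative deriv \<phi> (r * x) * r) (at x)"
      by (rule DERIV_chain2[OF D]) (auto intro!: derivative_eq_intros)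
    moreover have "((\<lambda>y. \<phi> (- (y / r^3))) has_real_derivative deriv \<phi> (- (x / r^3)) * (- (1 / r^3))) (at x)"
      by (rule DERIV_chain2[OF D]) (use r in \<open>auto intro!: derivative_eq_intros simp: eval_nat_numeral field_simps\<close>)
    ultimately show ?thesis unfolding \<psi>_def \<psi>'_def
      by (auto intro!: derivative_eq_intros simp: algebra_simps)
  qed
  have cd1: "continuous_on UNIV (\<lambda>y. deriv \<phi> (r * y))"
    by (rule continuous_on_compose2[OF contd]) (use r in \<open>auto intro!: continuous_intros\<close>)
  have cd2: "continuous_on UNIV (\<lambda>y. deriv \<phi> (- (y / r^3)))"
    by (rule continuous_on_compose2[OF contd]) (use r in \<open>auto intro!: continuous_intros\<close>)
  have cp1: "continuous_on UNIV (\<lambda>y. \<phi> (r * y))"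
    by (rule continuous_on_compose2[OF contp]) (use r in \<open>auto intro!: continuous_intros\<close>)
  have cp2: "continuous_on UNIV (\<lambda>y. \<phi> (- (y / r^3)))"
    by (rule continuous_on_compose2[OF contp]) (use r in \<open>auto intro!: continuous_intros\<close>)
  have cpsi': "continuous_on UNIV \<psi>'" unfolding \<psi>'_def using cd1 cd2 r by (intro continuous_intros) auto
  have ewd_app: "(LBINT x. p x * complex_of_real (\<psi>' x)) = - (LBINT x. q x * complex_of_real (\<psi> x))"
  proof (rule ewd[OF p q p2 q2 p0 q0 wd Dpsi cpsi' _ R0])
    show "\<psi> 0 = 0" unfolding \<psi>_def by simp
    show "\<psi> x = 0" if "x > R" for x using far[of x] that ab(2) unfolding \<psi>_def by auto
    show "\<psi>' x = 0" if "x > R" for x using far[of x] that ab(3) unfolding \<psi>'_def by auto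
  qed
  have ploc: "set_integrable lborel {-R..R} p" by (rule L2_locint[OF p p2])
  have qloc: "set_integrable lborel {-R..R} q" by (rule L2_locint[OF q q2])
  define F1 where "F1 y = p y * complex_of_real (deriv \<phi> (r * y))" for y
  define F2 where "F2 y = p y * complex_of_real (deriv \<phi> (- (y / r^3)))" for y
  define K1 where "K1 y = q y * complex_of_real (\<phi> (r * y))" for y
  define K2 where "K2 y = q y * complex_of_real (\<phi> (- (y / r^3)))" for y
  have F1i: "integrable lborel F1" unfolding F1_def
    by (rule int_mult_supp(1)[OF p ploc cd1]) (use far ab(3) in blast)
  have F2i: "integrable lborel F2" unfolding F2_def
    by (rule int_mult_supp(1)[OF p ploc cd2]) (use far ab(3) in blast)
  have K1i: "integrable lborel K1" unfolding K1_def
    by (rule int_mult_supp(1)[OF q qloc cp1]) (use far ab(2) in blast)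
  have K2i: "integrable lborel K2" unfolding K2_def
    by (rule int_mult_supp(1)[OF q qloc cp2]) (use far ab(2) in blast)
  have F1c: "F1 (c1 * x) = p (c1 * x) * complex_of_real (deriv \<phi> x)" for x
    unfolding F1_def c1_def using r by simp
  have F2c: "F2 (c2 * x) = p (c2 * x) * complex_of_real (deriv \<phi> x)" for x
    unfolding F2_def c2_def using r by simp
  have K1c: "K1 (c1 * x) = q (c1 * x) * complex_of_real (\<phi> x)" for x
    unfolding K1_def c1_def using r by simp
  have K2c: "K2 (c2 * x) = q (c2 * x) * complex_of_real (\<phi> x)" for x
    unfolding K2_def c2_def using r by simp
  note A1 = aff_int[OF c1(1)] and A2 = aff_int[OF c2(1)]
  have iF1c: "integrable lborel (\<lambda>x. p (c1 * x) * complex_of_real (deriv \<phi> x))"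
    using A1(1)[OF F1i] unfolding F1c .
  have iF2c: "integrable lborel (\<lambda>x. p (c2 * x) * complex_of_real (deriv \<phi> x))"
    using A2(1)[OF F2i] unfolding F2c .
  have iK1c: "integrable lborel (\<lambda>x. q (c1 * x) * complex_of_real (\<phi> x))"
    using A1(1)[OF K1i] unfolding K1c .
  have iK2c: "integrable lborel (\<lambda>x. q (c2 * x) * complex_of_real (\<phi> x))"
    using A2(1)[OF K2i] unfolding K2c .
  have L: "(LINT x:UNIV|lborel. f x * complex_of_real (deriv \<phi> x)) =
      (LBINT x. p (c1 * x) * complex_of_real (deriv \<phi> x)) + (LBINT x. p (c2 * x) * complex_of_real (deriv \<phi> x))"
    unfolding fdef set_lebesgue_integral_def using iF1c iF2c by (simp add: distrib_right)
  also have "\<dots> = r *\<^sub>R (LBINT y. F1 y) + (1 / r^3) *\<^sub>R (LBINT y. F2 y)"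
    using A1(2)[OF F1i] A2(2)[OF F2i] c1 c2 unfolding F1c F2c by simp
  also have "\<dots> = (LBINT x. p x * complex_of_real (\<psi>' x))"
  proof -
    have "(LBINT x. p x * complex_of_real (\<psi>' x)) = (LBINT x. r *\<^sub>R F1 x + (1 / r^3) *\<^sub>R F2 x)"
      unfolding F1_def F2_def \<psi>'_def by (intro Bochner_Integration.integral_cong) (auto simp: algebra_simps scaleR_conv_of_real)
    also have "\<dots> = r *\<^sub>R (LBINT y. F1 y) + (1 / r^3) *\<^sub>R (LBINT y. F2 y)"
      using F1i F2i by simp
    finally show ?thesis by simp
  qed
  also have "\<dots> = - (LBINT x. q x * complex_of_real (\<psi> x))" by (rule ewd_app)
  also have "(LBINT x. q x * complex_of_real (\<psi> x)) = (LBINT y. K1 y) - (LBINT y. K2 y)"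
  proof -
    have "(LBINT x. q x * complex_of_real (\<psi> x)) = (LBINT x. K1 x - K2 x)"
      unfolding K1_def K2_def \<psi>_def by (intro Bochner_Integration.integral_cong) (auto simp: algebra_simps)
    then show ?thesis using K1i K2i by simp
  qed
  also have "(LBINT y. K1 y) = (1 / r) *\<^sub>R (LBINT x. q (c1 * x) * complex_of_real (\<phi> x))"
    using A1(2)[OF K1i] c1 r unfolding K1c by simp
  also have "(LBINT y. K2 y) = r^3 *\<^sub>R (LBINT x. q (c2 * x) * complex_of_real (\<phi> x))"
    using A2(2)[OF K2i] c2 r unfolding K2c by simp
  also have "(1 / r) *\<^sub>R (LBINT x. q (c1 * x) * complex_of_real (\<phi> x)) - r^3 *\<^sub>R (LBINT x. q (c2 * x) * complex_of_real (\<phi> x))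
      = (LINT x:UNIV|lborel. g x * complex_of_real (\<phi> x))"
  proof -
    have "(LINT x:UNIV|lborel. g x * complex_of_real (\<phi> x)) =
        (LBINT x. complex_of_real c1 * (q (c1 * x) * complex_of_real (\<phi> x)) - complex_of_real (r^3) * (q (c2 * x) * complex_of_real (\<phi> x)))"
      unfolding gdef set_lebesgue_integral_def by (intro Bochner_Integration.integral_cong) (auto simp: algebra_simps)
    also have "\<dots> = complex_of_real c1 * (LBINT x. q (c1 * x) * complex_of_real (\<phi> x)) - complex_of_real (r^3) * (LBINT x. q (c2 * x) * complex_of_real (\<phi> x))"
      using iK1c iK2c by simp
    finally show ?thesis unfolding c1_def by (simp add: scaleR_conv_of_real)
  qed
  finally show "(LINT x:UNIV|lborel. f x * complex_of_real (deriv \<phi> x)) = - (LINT x:UNIV|lborel. g x * complex_of_real (\<phi> x))" .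
qed

lemma glue:
  assumes uv: "B1_pair {0<..} u v" and a: "-1 < a" "a < 0" and N: "Nn u \<noteq> 0"
  shows "\<exists>f g \<xi>. B1_pair UNIV f g \<and> (LINT t|lborel. (cmod (f t))\<^sup>2) \<noteq> 0 \<and>
     (LINT t|lborel. (cmod (g t))\<^sup>2 + (\<xi> + sigma a t * t)\<^sup>2 * (cmod (f t))\<^sup>2)
        / (LINT t|lborel. (cmod (f t))\<^sup>2) = sqrt (-a) * (Qn \<eta> u v / Nn u)"
proof -
  note G = good_conv[OF uv]
  define r where "r = sqrt (sqrt (-a))"
  have r: "0 < r" unfolding r_def using a by simp
  have r2: "r\<^sup>2 = sqrt (-a)" unfolding r_def using a by simp
  have r4: "r^4 = -a"
  proof -
    have "r^4 = (r\<^sup>2)\<^sup>2" by simp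
    also have "\<dots> = -a" unfolding r2 using a by simp
    finally show ?thesis .
  qed
  define f where "f = (\<lambda>t. restr u ((1/r) * t) + restr u ((-(r^3)) * t))"
  define g where "g = (\<lambda>t. complex_of_real (1/r) * restr v ((1/r) * t) - complex_of_real (r^3) * restr v ((-(r^3)) * t))"
  have GG1: "L2_on UNIV f" unfolding f_def by (rule glue_good(1)[OF G(1-7) r])
  have GG2: "L2_on UNIV g" unfolding g_def by (rule glue_good(2)[OF G(1-7) r])
  have GG3: "L2_on UNIV (\<lambda>t. complex_of_real t * f t)" unfolding f_def by (rule glue_good(3)[OF G(1-7) r])
  have GG4: "(LBINT t. (cmod (f t))\<^sup>2) = (r + 1/r^3) * (LBINT t. (cmod (restr u t))\<^sup>2)"
    unfolding f_def by (rule glue_good(4)[OF G(1-7) r])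
  have GG5: "(LBINT t. (cmod (g t))\<^sup>2 + (\<eta> * r + sigma (-(r^4)) t * t)\<^sup>2 * (cmod (f t))\<^sup>2)
       = (1/r + r^3) * (LBINT t. (cmod (restr v t))\<^sup>2 + (t + \<eta>)\<^sup>2 * (cmod (restr u t))\<^sup>2)"
    unfolding f_def g_def by (rule glue_good(5)[OF G(1-7) r])
  have W: "weak_deriv_on UNIV f g"
    unfolding f_def g_def by (rule glue_wd[OF G(1,2,3,4,6,7,8) r])
  have B: "B1_pair UNIV f g" unfolding B1_pair_def using GG1 GG2 GG3 W by simp
  have Nf: "(LBINT t. (cmod (f t))\<^sup>2) = (r + 1/r^3) * Nn u" using GG4 G(9) by simp
  have pos: "r + 1/r^3 > 0" using r by (simp add: add_pos_pos)
  have Nf0: "(LBINT t. (cmod (f t))\<^sup>2) \<noteq> 0" using Nf N pos by simp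
  have Num: "(LBINT t. (cmod (g t))\<^sup>2 + (\<eta> * r + sigma a t * t)\<^sup>2 * (cmod (f t))\<^sup>2) = (1/r + r^3) * Qn \<eta> u v"
    using GG5 G(10)[of \<eta>] r4 by simp
  have "(1/r + r^3) = r\<^sup>2 * (r + 1/r^3)" using r by (simp add: field_simps eval_nat_numeral)
  have "(LBINT t. (cmod (g t))\<^sup>2 + (\<eta> * r + sigma a t * t)\<^sup>2 * (cmod (f t))\<^sup>2) / (LBINT t. (cmod (f t))\<^sup>2)
      = sqrt (-a) * (Qn \<eta> u v / Nn u)"
  proof -
    define K where "K = r + 1/r^3"
    have K: "K \<noteq> 0" using pos unfolding K_def by simp
    have e: "1/r + r^3 = r\<^sup>2 * K" unfolding K_def by fact
    have "(r\<^sup>2 * K * Qn \<eta> u v) / (K * Nn u) = r\<^sup>2 * (Qn \<eta> u v / Nn u)"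
      using K N by (simp add: field_simps)
    then show ?thesis unfolding Num Nf r2[symmetric] e K_def[symmetric] by simp
  qed
  then show ?thesis using B Nf0 by blast
qed

definition bump :: "real \<Rightarrow> real" where "bump t = (t - 1)\<^sup>2 * (2 - t)\<^sup>2"
definition bump' :: "real \<Rightarrow> real" where "bump' t = 2 * (t - 1) * (2 - t)\<^sup>2 - 2 * (t - 1)\<^sup>2 * (2 - t)"

lemma bump_deriv: "(bump has_real_derivative bump' x) (at x)"
  unfolding bump_def bump'_def by (auto intro!: derivative_eq_intros simp: algebra_simps)

lemma exists_pair: "\<exists>u v. B1_pair {0<..} u v \<and> Nn u \<noteq> 0"
proof -
  define u where "u t = complex_of_real (indicator {1..2} t * bump t)" for t
  define v where "v t = complex_of_real (indicator {1..2} t * bump' t)" for t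
  have cb: "continuous_on UNIV bump" unfolding bump_def by (intro continuous_intros)
  have cb': "continuous_on UNIV bump'" unfolding bump'_def by (intro continuous_intros)
  have [measurable]: "bump \<in> borel_measurable borel" "bump' \<in> borel_measurable borel"
    using cb cb' by (auto intro: borel_measurable_continuous_onI)
  have int12: "integrable lborel (\<lambda>x. indicator {1..2} x * h x)" if "continuous_on UNIV h" for h :: "real \<Rightarrow> real"
    using borel_integrable_atLeastAtMost'[of 1 2 h] that continuous_on_subset unfolding set_integrable_def by auto
  have L2: "L2_on {0<..} (\<lambda>t. complex_of_real (indicator {1..2} t * h t))"
    if hc: "continuous_on UNIV h" for h :: "real \<Rightarrow> real"
  proof -
    have [measurable]: "h \<in> borel_measurable borel" using hc by (rule borel_measurable_continuous_onI)
    have "(\<lambda>x. indicator {0<..} x *\<^sub>R (cmod (complex_of_real (indicator {1..2} x * h x)))\<^sup>2) = (\<lambda>x. indicator {1..2} x * (h x)\<^sup>2)"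
      by (auto simp: indicator_def fun_eq_iff)
    moreover have "integrable lborel (\<lambda>x. indicator {1..2} x * (h x)\<^sup>2)"
      by (rule int12) (intro continuous_intros hc)
    ultimately show ?thesis
      unfolding L2_on_def set_borel_measurable_def set_integrable_def by simp
  qed
  have Lu: "L2_on {0<..} u" unfolding u_def by (rule L2[OF cb])
  have Lv: "L2_on {0<..} v" unfolding v_def by (rule L2[OF cb'])
  have Lt: "L2_on {0<..} (\<lambda>t. complex_of_real t * u t)"
  proof -
    have "(\<lambda>t. complex_of_real t * u t) = (\<lambda>t. complex_of_real (indicator {1..2} t * (t * bump t)))"
      unfolding u_def by (auto simp: fun_eq_iff indicator_def)
    moreover have "continuous_on UNIV (\<lambda>t. t * bump t)" using cb by (intro continuous_intros)
    ultimately show ?thesis using L2 by metis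
  qed
  have W: "weak_deriv_on {0<..} u v"
    unfolding weak_deriv_on_def
  proof (intro allI impI)
    fix \<phi> assume \<phi>: "test_on {0<..} \<phi>"
    note D = test_onD(1)[OF \<phi>] and contd = test_onD(2)[OF \<phi>] and contp = test_onD(3)[OF \<phi>]
    have ibp: "(LBINT x. (bump x * deriv \<phi> x) * indicator {1..2} x)
        = bump 2 * \<phi> 2 - bump 1 * \<phi> 1 - (LBINT x. (bump' x * \<phi> x) * indicator {1..2} x)"
      by (rule integral_by_parts) (use cb' contd bump_deriv D in \<open>auto simp: continuous_on_eq_continuous_at\<close>)
    have "(LINT x:{0<..}|lborel. u x * complex_of_real (deriv \<phi> x)) =
        complex_of_real (LBINT x. (bump x * deriv \<phi> x) * indicator {1..2} x)"
      unfolding set_lebesgue_integral_def u_def integral_complex_of_real[symmetric]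
      by (intro Bochner_Integration.integral_cong) (auto simp: indicator_def)
    moreover have "(LINT x:{0<..}|lborel. v x * complex_of_real (\<phi> x)) =
        complex_of_real (LBINT x. (bump' x * \<phi> x) * indicator {1..2} x)"
      unfolding set_lebesgue_integral_def v_def integral_complex_of_real[symmetric]
      by (intro Bochner_Integration.integral_cong) (auto simp: indicator_def)
    moreover have "bump 2 = 0" "bump 1 = 0" unfolding bump_def by simp_all
    ultimately show "(LINT x:{0<..}|lborel. u x * complex_of_real (deriv \<phi> x)) =
        - (LINT x:{0<..}|lborel. v x * complex_of_real (\<phi> x))" using ibp by simp
  qed
  have B: "B1_pair {0<..} u v" unfolding B1_pair_def using Lu Lv W Lt by simp
  have "Nn u = (LBINT x. indicator {1..2} x * (bump x)\<^sup>2)"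
    unfolding Nn_def set_lebesgue_integral_def u_def
    by (intro Bochner_Integration.integral_cong) (auto simp: indicator_def)
  also have "\<dots> = integral {1..2} (\<lambda>x. (bump x)\<^sup>2)"
  proof -
    have si: "set_integrable lborel {1..2} (\<lambda>x. (bump x)\<^sup>2)"
      by (rule borel_integrable_atLeastAtMost') (use cb continuous_on_subset in \<open>blast intro: continuous_intros\<close>)
    show ?thesis using set_borel_integral_eq_integral(2)[OF si] unfolding set_lebesgue_integral_def by simp
  qed
  finally have Ne: "Nn u = integral {1..2} (\<lambda>x. (bump x)\<^sup>2)" .
  have "integral {1..2} (\<lambda>x. (bump x)\<^sup>2) \<noteq> 0"
  proof
    assume "integral {1..2} (\<lambda>x. (bump x)\<^sup>2) = 0"
    then have "\<forall>x\<in>{1..2}. (bump x)\<^sup>2 = 0"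
      by (subst (asm) integral_eq_0_iff) (auto simp: bump_def intro!: continuous_intros)
    then have "bump (3/2) = 0" by auto
    then show False unfolding bump_def by simp
  qed
  then have "Nn u \<noteq> 0" using Ne by simp
  then show ?thesis using B by blast
qed

lemma L2_nonneg: "0 \<le> (LINT t:I|lborel. (cmod (u t))\<^sup>2)"
  unfolding set_lebesgue_integral_def by (intro integral_nonneg_AE) (auto simp: indicator_def)

lemma Qn_nonneg: "0 \<le> Qn \<eta> u v"
  unfolding Qn_def set_lebesgue_integral_def by (intro integral_nonneg_AE) (auto simp: indicator_def)

lemma mu_quot_nonneg: "0 \<le> (LINT t|lborel. (cmod (g t))\<^sup>2 + (\<xi> + sigma a t * t)\<^sup>2 * (cmod (f t))\<^sup>2)
        / (LINT t|lborel. (cmod (f t))\<^sup>2)"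
  by (intro divide_nonneg_nonneg integral_nonneg_AE) auto

theorem proposition3p1:
  fixes a :: real
  assumes "-1 < a" and "a < 0"
  shows "beta a < Theta0"
proof -
  obtain u0 v0 where p0: "B1_pair {0<..} u0 v0" "Nn u0 \<noteq> 0" using exists_pair by blast
  define S where "S = (\<lambda>\<eta>. {(LINT t:{0<..}|lborel. (cmod (v t))\<^sup>2 + (t + \<eta>)\<^sup>2 * (cmod (u t))\<^sup>2)
                 / (LINT t:{0<..}|lborel. (cmod (u t))\<^sup>2) | u v.
                 B1_pair {0<..} u v \<and> (LINT t:{0<..}|lborel. (cmod (u t))\<^sup>2) \<noteq> 0})"
  have lN: "lambdaN \<eta> = Inf (S \<eta>)" for \<eta> unfolding lambdaN_def S_def ..
  have Sne: "S \<eta> \<noteq> {}" for \<eta> using p0 unfolding S_def Nn_def by blast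
  have Slow: "q \<ge> 1/12" if "q \<in> S \<eta>" for q \<eta>
  proof -
    from that obtain u v where uv: "B1_pair {0<..} u v" "Nn u \<noteq> 0" "q = Qn \<eta> u v / Nn u"
      unfolding S_def Nn_def Qn_def by blast
    have "Nn u > 0" using uv(2) L2_nonneg[of "{0<..}" u] unfolding Nn_def by linarith
    moreover have "Nn u \<le> 12 * Qn \<eta> u v" by (rule neumann_lower[OF uv(1)])
    moreover have "Qn \<eta> u v = q * Nn u" using uv(2,3) by simp
    ultimately have "Nn u * 1 \<le> Nn u * (12 * q)" by (metis mult.commute mult.left_commute mult.right_neutral)
    then show ?thesis using \<open>Nn u > 0\<close> by (subst (asm) mult_le_cancel_left_pos) auto
  qed
  have lNlow: "lambdaN \<eta> \<ge> 1/12" for \<eta>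
    unfolding lN by (rule cInf_greatest[OF Sne Slow])
  have T0: "Theta0 \<ge> 1/12"
    unfolding Theta0_def by (rule cInf_greatest) (use lNlow in auto)
  define M where "M = (\<lambda>\<xi>. {(LINT t|lborel. (cmod (v t))\<^sup>2 + (\<xi> + sigma a t * t)\<^sup>2 * (cmod (u t))\<^sup>2)
                 / (LINT t|lborel. (cmod (u t))\<^sup>2) | u v.
                 B1_pair UNIV u v \<and> (LINT t|lborel. (cmod (u t))\<^sup>2) \<noteq> 0})"
  have muM: "mu a \<xi> = Inf (M \<xi>)" for \<xi> unfolding mu_def M_def ..
  obtain f0 g0 \<xi>0 where fg0: "B1_pair UNIV f0 g0" "(LINT t|lborel. (cmod (f0 t))\<^sup>2) \<noteq> 0"
    using glue[OF p0(1) assms p0(2)] by blast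
  have Mne: "M \<xi> \<noteq> {}" for \<xi> using fg0 unfolding M_def by blast
  have Mlow: "q \<ge> 0" if "q \<in> M \<xi>" for q \<xi> using that mu_quot_nonneg unfolding M_def by blast
  have mu_nonneg: "mu a \<xi> \<ge> 0" for \<xi> unfolding muM by (rule cInf_greatest[OF Mne Mlow])
  have beta_le: "beta a \<le> mu a \<xi>" for \<xi>
    unfolding beta_def by (rule cInf_lower) (auto intro!: bdd_belowI[of _ 0] mu_nonneg)
  have mu_le: "mu a \<xi> \<le> q" if "q \<in> M \<xi>" for q \<xi>
    unfolding muM by (rule cInf_lower[OF that]) (auto intro!: bdd_belowI[of _ 0] Mlow)
  define s where "s = sqrt (-a)"
  have s: "0 < s" "s < 1" using assms unfolding s_def by auto
  have key: "beta a / s \<le> q" if "q \<in> S \<eta>" for q \<eta>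
  proof -
    from that obtain u v where uv: "B1_pair {0<..} u v" "Nn u \<noteq> 0" "q = Qn \<eta> u v / Nn u"
      unfolding S_def Nn_def Qn_def by blast
    obtain f g \<xi> where fg: "B1_pair UNIV f g" "(LINT t|lborel. (cmod (f t))\<^sup>2) \<noteq> 0"
      "(LINT t|lborel. (cmod (g t))\<^sup>2 + (\<xi> + sigma a t * t)\<^sup>2 * (cmod (f t))\<^sup>2)
        / (LINT t|lborel. (cmod (f t))\<^sup>2) = s * q"
      using glue[OF uv(1) assms uv(2), of \<eta>] uv(3) unfolding s_def by blast
    have "s * q \<in> M \<xi>" using fg unfolding M_def by force
    then have "beta a \<le> s * q" using beta_le mu_le by (meson order_trans)
    then show ?thesis using s by (simp add: field_simps)
  qed
  have "beta a / s \<le> lambdaN \<eta>" for \<eta> unfolding lN by (rule cInf_greatest[OF Sne key])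
  then have "beta a / s \<le> Theta0" unfolding Theta0_def by (intro cInf_greatest) auto
  then have "beta a \<le> s * Theta0" using s by (simp add: field_simps)
  also have "\<dots> < Theta0" using s T0 by (simp add: mult_less_cancel_right1)  
  finally show ?thesis .
qed


end
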